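(* Let $A(x)$ be the unique formal power series with $A(0)=1$ such that $[x^n]A(x)^n=[x^{n+1}]I_0(x)$ for all $n\ge0$ (OEIS A088221). Then $A(x)=(1+C(x))^2$; that is, $[x^n]A(x)$ equals the number of ordered pairs $(C_1,C_2)$ of chord diagrams, each either empty or connected, with total number of chords $n$.
   Context: Chord diagrams are perfect matchings of $\{1,\dots,2n\}$ counted by chords. Connectedness refers to the intersection graph (chords adjacent iff they cross: $\{a<b\},\{c<d\}$ with $a<c<b<d$ or $c<a<d<b$); the empty diagram is not connected. $C(x)$ is the ordinary generating function of connected chord diagrams. $I_0(x)$ is the ordinary generating function of nonempty indecomposable chord diagrams (no $0<k<n$ with $\{1,\dots,2k\}$ a union of chords). *)

theory Defs
  imports "HOL-Computational_Algebra.Formal_Power_Series"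
begin

definition chord_diagram :: "nat \<Rightarrow> (nat \<times> nat) set \<Rightarrow> bool" where
  "chord_diagram n M \<longleftrightarrow>
     (\<forall>p\<in>M. fst p < snd p \<and> fst p \<in> {1..2*n} \<and> snd p \<in> {1..2*n}) \<and>
     (\<forall>i\<in>{1..2*n}. \<exists>!p. p \<in> M \<and> (fst p = i \<or> snd p = i))"

definition crosses :: "nat \<times> nat \<Rightarrow> nat \<times> nat \<Rightarrow> bool" where
  "crosses p q \<longleftrightarrow>
     (fst p < fst q \<and> fst q < snd p \<and> snd p < snd q) \<or>
     (fst q < fst p \<and> fst p < snd q \<and> snd q < snd p)"

definition connected_cd :: "(nat \<times> nat) set \<Rightarrow> bool" where
  "connected_cd M \<longleftrightarrow> M \<noteq> {} \<and>
     (\<forall>p\<in>M. \<forall>q\<in>M. (p, q) \<in> {(x, y). x \<in> M \<and> y \<in> M \<and> crosses x y}\<^sup>*)"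

definition chord_set :: "nat \<times> nat \<Rightarrow> nat set" where
  "chord_set p = {fst p, snd p}"

definition indecomposable_cd :: "nat \<Rightarrow> (nat \<times> nat) set \<Rightarrow> bool" where
  "indecomposable_cd n M \<longleftrightarrow> n \<ge> 1 \<and>
     \<not> (\<exists>k. 0 < k \<and> k < n \<and> (\<exists>S\<subseteq>M. \<Union>(chord_set ` S) = {1..2*k}))"

definition C_gf :: "rat fps" where
  "C_gf = Abs_fps (\<lambda>n. of_nat (card {M. chord_diagram n M \<and> connected_cd M}))"

definition I0_gf :: "rat fps" where
  "I0_gf = Abs_fps (\<lambda>n. of_nat (card {M. chord_diagram n M \<and> indecomposable_cd n M}))"

end

theory Submission
  imports Defs
begin

unbundle fps_syntax

definition pmatch :: "nat set \<Rightarrow> (nat \<times> nat) set \<Rightarrow> bool" where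
  "pmatch S M \<longleftrightarrow> (\<forall>p\<in>M. fst p < snd p \<and> fst p \<in> S \<and> snd p \<in> S) \<and>
     (\<forall>i\<in>S. \<exists>!p. p \<in> M \<and> (fst p = i \<or> snd p = i))"

lemma chord_diagram_pmatch: "chord_diagram n M = pmatch {1..2*n} M"
  unfolding chord_diagram_def pmatch_def by simp

lemma pmatch_sub: "pmatch S M \<Longrightarrow> M \<subseteq> S \<times> S"
  unfolding pmatch_def by (auto simp: mem_Times_iff)

lemma finite_pmatch: "finite S \<Longrightarrow> finite {M. pmatch S M}"
  by (rule finite_subset[of _ "Pow (S \<times> S)"]) (auto dest: pmatch_sub)

lemma pmatch_empty_iff: "pmatch {} M \<longleftrightarrow> M = {}"
  unfolding pmatch_def by auto

lemma pmatch_uniq: "pmatch S M \<Longrightarrow> p \<in> M \<Longrightarrow> q \<in> M \<Longrightarrow> i \<in> chord_set p \<Longrightarrow> i \<in> chord_set q \<Longrightarrow> p = q"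
proof -
  assume a: "pmatch S M" "p \<in> M" "q \<in> M" "i \<in> chord_set p" "i \<in> chord_set q"
  then have "i \<in> S" unfolding pmatch_def chord_set_def by auto
  then have u: "\<exists>!p. p \<in> M \<and> (fst p = i \<or> snd p = i)" using a(1) unfolding pmatch_def by blast
  have "p \<in> M \<and> (fst p = i \<or> snd p = i)" "q \<in> M \<and> (fst q = i \<or> snd q = i)"
    using a unfolding chord_set_def by auto
  then show "p = q" using u by blast
qed

lemma pmatch_ex: "pmatch S M \<Longrightarrow> i \<in> S \<Longrightarrow> \<exists>p\<in>M. i \<in> chord_set p"
  unfolding pmatch_def chord_set_def by (metis insertCI)

lemma pmatch_in: "pmatch S M \<Longrightarrow> p \<in> M \<Longrightarrow> fst p \<in> S \<and> snd p \<in> S \<and> fst p < snd p"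
  unfolding pmatch_def by auto

lemma pmatchI:
  assumes "\<And>p. p \<in> M \<Longrightarrow> fst p < snd p \<and> fst p \<in> S \<and> snd p \<in> S"
    and "\<And>i. i \<in> S \<Longrightarrow> \<exists>p\<in>M. i \<in> chord_set p"
    and "\<And>p q i. p \<in> M \<Longrightarrow> q \<in> M \<Longrightarrow> i \<in> chord_set p \<Longrightarrow> i \<in> chord_set q \<Longrightarrow> p = q"
  shows "pmatch S M"
  unfolding pmatch_def
proof (intro conjI ballI)
  fix i assume i: "i \<in> S"
  then obtain p where "p \<in> M" "i \<in> chord_set p" using assms(2) by blast
  show "\<exists>!p. p \<in> M \<and> (fst p = i \<or> snd p = i)"
  proof (rule ex1I[of _ p])
    show "p \<in> M \<and> (fst p = i \<or> snd p = i)" using \<open>p \<in> M\<close> \<open>i \<in> chord_set p\<close> unfolding chord_set_def by auto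
    fix q assume "q \<in> M \<and> (fst q = i \<or> snd q = i)"
    then show "q = p" using assms(3)[of q p i] \<open>p \<in> M\<close> \<open>i \<in> chord_set p\<close> unfolding chord_set_def by auto
  qed
qed (use assms(1) in auto)

lemma pmatch_union:
  assumes "pmatch A M1" "pmatch B M2" "A \<inter> B = {}"
  shows "pmatch (A \<union> B) (M1 \<union> M2)"
proof (rule pmatchI)
  fix p q i assume p: "p \<in> M1 \<union> M2" and q: "q \<in> M1 \<union> M2" and i: "i \<in> chord_set p" "i \<in> chord_set q"
  show "p = q"
  proof (cases "p \<in> M1")
    case True
    then have iA: "i \<in> A" using pmatch_in[OF assms(1), of p] i unfolding chord_set_def by auto
    show ?thesis
    proof (cases "q \<in> M1")
      case True then show ?thesis using pmatch_uniq[OF assms(1)] \<open>p \<in> M1\<close> i by blast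
    next
      case False then have "q \<in> M2" using q by auto
      then have "i \<in> B" using pmatch_in[OF assms(2), of q] i unfolding chord_set_def by auto
      then show ?thesis using iA assms(3) by auto
    qed
  next
    case False then have pM2: "p \<in> M2" using p by auto
    then have iB: "i \<in> B" using pmatch_in[OF assms(2), of p] i unfolding chord_set_def by auto
    show ?thesis
    proof (cases "q \<in> M2")
      case True then show ?thesis using pmatch_uniq[OF assms(2)] pM2 i by blast
    next
      case False then have "q \<in> M1" using q by auto
      then have "i \<in> A" using pmatch_in[OF assms(1), of q] i unfolding chord_set_def by auto
      then show ?thesis using iB assms(3) by auto
    qed
  qed
next
  fix p assume "p \<in> M1 \<union> M2" then show "fst p < snd p \<and> fst p \<in> A \<union> B \<and> snd p \<in> A \<union> B"
    using pmatch_in[OF assms(1)] pmatch_in[OF assms(2)] by blast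
next
  fix i assume "i \<in> A \<union> B" then show "\<exists>p\<in>M1 \<union> M2. i \<in> chord_set p"
    using pmatch_ex[OF assms(1)] pmatch_ex[OF assms(2)] by blast
qed


fun pmc :: "nat \<Rightarrow> nat" where
  "pmc 0 = 1" | "pmc (Suc 0) = 0" | "pmc (Suc (Suc n)) = Suc n * pmc n"

lemma pmatch_single: "a < b \<Longrightarrow> pmatch {a, b} {(a, b)}"
  by (rule pmatchI) (auto simp: chord_set_def)

lemma pmatch_remove_min:
  assumes M: "pmatch S M" and fin: "finite S" and ne: "S \<noteq> {}"
  shows "\<exists>j\<in>S - {Min S}. (Min S, j) \<in> M \<and> pmatch (S - {Min S, j}) (M - {(Min S, j)})"
proof -
  define s where "s = Min S"
  have sS: "s \<in> S" using fin ne s_def by simp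
  obtain p where p: "p \<in> M" "s \<in> chord_set p" using pmatch_ex[OF M sS] by blast
  have pin: "fst p \<in> S" "snd p \<in> S" "fst p < snd p" using pmatch_in[OF M p(1)] by auto
  have "fst p = s"
  proof (rule ccontr)
    assume "fst p \<noteq> s" then have "snd p = s" using p(2) by (auto simp: chord_set_def)
    then have "fst p < s" using pin by simp
    moreover have "s \<le> fst p" using pin fin s_def by simp
    ultimately show False by simp
  qed
  define j where "j = snd p"
  have pj: "p = (s, j)" using \<open>fst p = s\<close> j_def by (cases p) auto
  have jS: "j \<in> S - {s}" using pin \<open>fst p = s\<close> j_def by auto
  have "pmatch (S - {s, j}) (M - {(s, j)})"
  proof (rule pmatchI)
    fix q assume q: "q \<in> M - {(s, j)}"
    have qi: "fst q \<in> S" "snd q \<in> S" "fst q < snd q" using pmatch_in[OF M] q by auto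
    have "fst q \<notin> {s, j}" "snd q \<notin> {s, j}"
      using pmatch_uniq[OF M, of q p] q p(1) pj by (auto simp: chord_set_def)
    then show "fst q < snd q \<and> fst q \<in> S - {s, j} \<and> snd q \<in> S - {s, j}" using qi by auto
  next
    fix i assume i: "i \<in> S - {s, j}"
    then obtain q where q: "q \<in> M" "i \<in> chord_set q" using pmatch_ex[OF M] by blast
    then have "q \<noteq> (s, j)" using i by (auto simp: chord_set_def)
    then show "\<exists>q\<in>M - {(s, j)}. i \<in> chord_set q" using q by blast
  next
    fix q r i assume "q \<in> M - {(s, j)}" "r \<in> M - {(s, j)}" "i \<in> chord_set q" "i \<in> chord_set r"
    then show "q = r" using pmatch_uniq[OF M] by blast
  qed
  then show ?thesis using jS pj p(1) s_def by blast
qed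

lemma card_pmatch: "finite S \<Longrightarrow> card {M. pmatch S M} = pmc (card S)"
proof (induction "card S" arbitrary: S rule: less_induct)
  case less
  show ?case
  proof (cases "card S")
    case 0
    then have "S = {}" using less.prems by simp
    then have "{M. pmatch S M} = {{}}" by (auto simp: pmatch_empty_iff)
    then show ?thesis using 0 by simp
  next
    case (Suc m)
    then have ne: "S \<noteq> {}" by auto
    define s where "s = Min S"
    have sS: "s \<in> S" using less.prems ne s_def by simp
    let ?F = "\<lambda>j. insert (s, j) ` {M'. pmatch (S - {s, j}) M'}"
    have eq: "{M. pmatch S M} = (\<Union>j\<in>S - {s}. ?F j)"
    proof (intro equalityI subsetI)
      fix M assume "M \<in> {M. pmatch S M}"
      then have M: "pmatch S M" by simp
      obtain j where j: "j \<in> S - {s}" "(s, j) \<in> M" "pmatch (S - {s, j}) (M - {(s, j)})"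
        using pmatch_remove_min[OF M less.prems ne] s_def by blast
      have "M = insert (s, j) (M - {(s, j)})" using j by auto
      then show "M \<in> (\<Union>j\<in>S - {s}. ?F j)" using j by blast
    next
      fix M assume "M \<in> (\<Union>j\<in>S - {s}. ?F j)"
      then obtain j M' where j: "j \<in> S - {s}" "pmatch (S - {s, j}) M'" "M = insert (s, j) M'" by blast
      have "s \<le> j" using j(1) less.prems s_def by simp
      then have "s < j" using j(1) by auto
      have "pmatch ({s, j} \<union> (S - {s, j})) ({(s, j)} \<union> M')"
        by (rule pmatch_union[OF pmatch_single[OF \<open>s < j\<close>] j(2)]) auto
      moreover have "{s, j} \<union> (S - {s, j}) = S" using j(1) sS by auto
      ultimately show "M \<in> {M. pmatch S M}" using j(3) by simp
    qed
    have card_j: "card (?F j) = pmc (card S - 2)" if j: "j \<in> S - {s}" for j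
    proof -
      have "inj_on (insert (s, j)) {M'. pmatch (S - {s, j}) M'}"
      proof (rule inj_onI)
        fix A B assume A: "A \<in> {M'. pmatch (S - {s, j}) M'}" and B: "B \<in> {M'. pmatch (S - {s, j}) M'}"
          and e: "insert (s, j) A = insert (s, j) B"
        have "(s, j) \<notin> A" "(s, j) \<notin> B" using A B pmatch_in by fastforce+
        then show "A = B" using e by (metis insert_ident)
      qed
      then have "card (?F j) = card {M'. pmatch (S - {s, j}) M'}" by (rule card_image)
      also have "\<dots> = pmc (card (S - {s, j}))"
      proof (rule less.hyps)
        have "card S > 0" using less.prems sS card_gt_0_iff by blast
        then show "card (S - {s, j}) < card S" using j sS less.prems by (simp add: card_Diff_subset)
      qed (use less.prems in auto)
      also have "card (S - {s, j}) = card S - 2" using j sS less.prems by (simp add: card_Diff_subset)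
      finally show ?thesis .
    qed
    have "card {M. pmatch S M} = (\<Sum>j\<in>S - {s}. card (?F j))"
      unfolding eq
    proof (rule card_UN_disjoint)
      show "finite (S - {s})" using less.prems by simp
      show "\<forall>j\<in>S - {s}. finite (?F j)" using less.prems finite_pmatch by auto
      show "\<forall>j\<in>S - {s}. \<forall>k\<in>S - {s}. j \<noteq> k \<longrightarrow> ?F j \<inter> ?F k = {}"
      proof (intro ballI impI)
        fix j k assume jk: "j \<in> S - {s}" "k \<in> S - {s}" "j \<noteq> k"
        show "?F j \<inter> ?F k = {}"
        proof (rule ccontr)
          assume "?F j \<inter> ?F k \<noteq> {}"
          then obtain A B where A: "pmatch (S - {s, j}) A" and B: "pmatch (S - {s, k}) B"
            and e: "insert (s, j) A = insert (s, k) B" by blast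
          then have "(s, j) \<in> insert (s, k) B" by blast
          then have "(s, j) \<in> B" using jk by auto
          then show False using pmatch_in[OF B] by fastforce
        qed
      qed
    qed
    also have "\<dots> = (card S - 1) * pmc (card S - 2)"
      using card_j less.prems sS by simp
    also have "\<dots> = pmc (card S)"
    proof (cases m)
      case 0
      then show ?thesis using Suc by simp
    next
      case (Suc k)
      then show ?thesis using \<open>card S = Suc m\<close> by simp
    qed
    finally show ?thesis .
  qed
qed

lemma pmc_odd: "pmc (2 * k + 1) = 0"
  by (induction k) auto

lemma pmc_even_pos: "pmc (2 * k) > 0"
  by (induction k) (auto simp: numeral_2_eq_2)


definition rk :: "nat set \<Rightarrow> nat \<Rightarrow> nat" where
  "rk A x = card {y\<in>A. y < x}"

lemma rk_strict_mono: "finite A \<Longrightarrow> strict_mono_on A (rk A)"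
proof (rule strict_mono_onI)
  fix x y assume "finite A" "x \<in> A" "y \<in> A" "x < y"
  then have "{z\<in>A. z < x} \<subset> {z\<in>A. z < y}" by auto
  then show "rk A x < rk A y" unfolding rk_def using \<open>finite A\<close> by (intro psubset_card_mono) auto
qed

lemma rk_bij: assumes "finite A" shows "bij_betw (rk A) A {..<card A}"
proof -
  have inj: "inj_on (rk A) A" using strict_mono_on_imp_inj_on[OF rk_strict_mono[OF assms]] .
  have sub: "rk A ` A \<subseteq> {..<card A}"
  proof
    fix z assume "z \<in> rk A ` A"
    then obtain x where x: "x \<in> A" "z = rk A x" by blast
    have "{y\<in>A. y < x} \<subset> A" using x by auto
    then show "z \<in> {..<card A}" using x assms unfolding rk_def by (simp add: psubset_card_mono)
  qed
  have "card (rk A ` A) = card {..<card A}" using card_image[OF inj] by simp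
  then have "rk A ` A = {..<card A}" using card_subset_eq[OF _ sub] by simp
  then show ?thesis using inj unfolding bij_betw_def by simp
qed

definition xrel :: "(nat \<times> nat) set \<Rightarrow> ((nat \<times> nat) \<times> (nat \<times> nat)) set" where
  "xrel M = {(x, y). x \<in> M \<and> y \<in> M \<and> crosses x y}"

lemma connected_cd_xrel: "connected_cd M \<longleftrightarrow> M \<noteq> {} \<and> (\<forall>p\<in>M. \<forall>q\<in>M. (p, q) \<in> (xrel M)\<^sup>*)"
  unfolding connected_cd_def xrel_def by simp

lemma crosses_mono:
  assumes "strict_mono_on A f" "fst p \<in> A" "snd p \<in> A" "fst q \<in> A" "snd q \<in> A" "crosses p q"
  shows "crosses (map_prod f f p) (map_prod f f q)"
  using assms(6) strict_mono_onD[OF assms(1)] assms(2-5) unfolding crosses_def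
  by (cases p, cases q) auto

lemma relabel_le:
  assumes fA: "finite A" and fB: "finite B" and sm: "strict_mono_on A f" and bij: "bij_betw f A B"
  shows "card {R. pmatch A R \<and> connected_cd R} \<le> card {R. pmatch B R \<and> connected_cd R}"
proof -
  let ?h = "map_prod f f"
  have injf: "inj_on f A" using bij bij_betw_def by blast
  have injh: "inj_on ?h (A \<times> A)" using map_prod_inj_on[OF injf injf] .
  have inj: "inj_on (image ?h) {R. pmatch A R \<and> connected_cd R}"
  proof (rule inj_onI)
    fix R R' assume "R \<in> {R. pmatch A R \<and> connected_cd R}" "R' \<in> {R. pmatch A R \<and> connected_cd R}"
      "?h ` R = ?h ` R'"
    then show "R = R'" using inj_on_image_eq_iff[OF injh, of R R'] pmatch_sub[of A R] pmatch_sub[of A R'] by simp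
  qed
  have maps: "image ?h ` {R. pmatch A R \<and> connected_cd R} \<subseteq> {R. pmatch B R \<and> connected_cd R}"
  proof clarify
    fix R assume R: "pmatch A R" "connected_cd R"
    have cs: "chord_set (?h p) = f ` chord_set p" for p by (cases p) (auto simp: chord_set_def)
    have pm: "pmatch B (?h ` R)"
    proof (rule pmatchI)
      fix p' assume "p' \<in> ?h ` R"
      then obtain p where p: "p \<in> R" "p' = ?h p" by auto
      have "fst p \<in> A" "snd p \<in> A" "fst p < snd p" using pmatch_in[OF R(1) p(1)] by auto
      then show "fst p' < snd p' \<and> fst p' \<in> B \<and> snd p' \<in> B"
        using p strict_mono_onD[OF sm] bij unfolding bij_betw_def by (cases p) auto
    next
      fix i assume "i \<in> B"
      then obtain a where a: "a \<in> A" "i = f a" using bij unfolding bij_betw_def by blast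
      obtain p where "p \<in> R" "a \<in> chord_set p" using pmatch_ex[OF R(1) a(1)] by blast
      then show "\<exists>p\<in>?h ` R. i \<in> chord_set p" using a cs by blast
    next
      fix p' q' i assume "p' \<in> ?h ` R" "q' \<in> ?h ` R" "i \<in> chord_set p'" "i \<in> chord_set q'"
      then obtain p q where pq0: "p \<in> R" "q \<in> R" "p' = ?h p" "q' = ?h q" "i \<in> f ` chord_set p" "i \<in> f ` chord_set q"
        using cs by auto
      then obtain a b where pq: "p \<in> R" "q \<in> R" "p' = ?h p" "q' = ?h q" "a \<in> chord_set p" "b \<in> chord_set q"
        "i = f a" "i = f b" by blast
      have "a \<in> A" "b \<in> A" using pq pmatch_in[OF R(1) pq(1)] pmatch_in[OF R(1) pq(2)] by (auto simp: chord_set_def)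
      then have "a = b" using pq injf inj_onD[OF injf, of a b] by simp
      then have "p = q" using pq pmatch_uniq[OF R(1), of p q a] by simp
      then show "p' = q'" using pq by simp
    qed
    have cn: "connected_cd (?h ` R)"
      unfolding connected_cd_xrel
    proof (intro conjI ballI)
      show "?h ` R \<noteq> {}" using R(2) unfolding connected_cd_def by simp
      fix p' q' assume p'q': "p' \<in> ?h ` R" "q' \<in> ?h ` R"
      obtain p where p: "p \<in> R" "p' = ?h p" using p'q'(1) by (rule imageE) simp
      obtain q where q: "q \<in> R" "q' = ?h q" using p'q'(2) by (rule imageE) simp
      note pq = p(1) q(1) p(2) q(2)
      have "(p, q) \<in> (xrel R)\<^sup>*" using R(2) pq unfolding connected_cd_xrel by blast
      then have "(?h p, ?h q) \<in> (xrel (?h ` R))\<^sup>*"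
      proof (induction rule: rtrancl_induct)
        case base show ?case by simp
      next
        case (step y z)
        then have yz: "y \<in> R" "z \<in> R" "crosses y z" by (auto simp: xrel_def)
        have "crosses (?h y) (?h z)"
          by (rule crosses_mono[OF sm]) (use yz pmatch_in[OF R(1) yz(1)] pmatch_in[OF R(1) yz(2)] in auto)
        then have "(?h y, ?h z) \<in> xrel (?h ` R)" using yz by (auto simp: xrel_def)
        then show ?case by (rule rtrancl_into_rtrancl[OF step.IH])
      qed
      then show "(p', q') \<in> (xrel (?h ` R))\<^sup>*" using pq by simp
    qed
    show "pmatch B (?h ` R) \<and> connected_cd (?h ` R)" using pm cn by simp
  qed
  show ?thesis
    by (rule card_inj_on_le[OF inj maps]) (rule finite_subset[OF _ finite_pmatch[OF fB]], auto)
qed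

definition cconn :: "nat \<Rightarrow> nat" where
  "cconn m = card {R. pmatch {..<m} R \<and> connected_cd R}"

lemma inv_strict_mono:
  assumes sm: "strict_mono_on A (f :: nat \<Rightarrow> nat)" and bij: "bij_betw f A B"
  shows "strict_mono_on B (inv_into A f)"
proof (rule strict_mono_onI)
  fix x y assume xy: "x \<in> B" "y \<in> B" "x < y"
  let ?g = "inv_into A f"
  have g: "?g x \<in> A" "?g y \<in> A" "f (?g x) = x" "f (?g y) = y"
    using xy bij by (auto simp: bij_betw_def inv_into_into f_inv_into_f)
  show "?g x < ?g y"
  proof (rule ccontr)
    assume "\<not> ?g x < ?g y"
    then have "?g y < ?g x \<or> ?g y = ?g x" by auto
    then show False
    proof
      assume "?g y < ?g x" then have "f (?g y) < f (?g x)" using strict_mono_onD[OF sm g(2) g(1)] by simp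
      then show False using g xy by simp
    next
      assume "?g y = ?g x" then have "f (?g y) = f (?g x)" by simp
      then show False using g xy by simp
    qed
  qed
qed

lemma card_conn: assumes "finite P" shows "card {R. pmatch P R \<and> connected_cd R} = cconn (card P)"
proof -
  have b: "bij_betw (rk P) P {..<card P}" using rk_bij[OF assms] .
  have s: "strict_mono_on P (rk P)" using rk_strict_mono[OF assms] .
  show ?thesis unfolding cconn_def
  proof (rule antisym)
    show "card {R. pmatch P R \<and> connected_cd R} \<le> card {R. pmatch {..<card P} R \<and> connected_cd R}"
      by (rule relabel_le[OF assms _ s b]) simp
    show "card {R. pmatch {..<card P} R \<and> connected_cd R} \<le> card {R. pmatch P R \<and> connected_cd R}"
      by (rule relabel_le[OF _ assms inv_strict_mono[OF s b] bij_betw_inv_into[OF b]]) simp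
  qed
qed

lemma cconn_le_pmc: "cconn m \<le> pmc m"
proof -
  have "cconn m \<le> card {R. pmatch {..<m} R}" unfolding cconn_def
    by (rule card_mono[OF finite_pmatch]) auto
  then show ?thesis using card_pmatch[of "{..<m}"] by simp
qed

lemma cconn_odd: "cconn (2 * k + 1) = 0"
  using cconn_le_pmc[of "2 * k + 1"] pmc_odd[of k] by simp

lemma cconn_0: "cconn 0 = 0"
  unfolding cconn_def by (simp add: pmatch_empty_iff connected_cd_def)


definition rootc :: "nat \<Rightarrow> (nat \<times> nat) set \<Rightarrow> (nat \<times> nat) set" where
  "rootc s M = {q\<in>M. \<exists>p\<in>M. s \<in> chord_set p \<and> (p, q) \<in> (xrel M)\<^sup>*}"

definition pts :: "(nat \<times> nat) set \<Rightarrow> nat set" where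
  "pts R = \<Union> (chord_set ` R)"

definition gapresp :: "nat set \<Rightarrow> (nat \<times> nat) set \<Rightarrow> bool" where
  "gapresp P N \<longleftrightarrow> (\<forall>q\<in>N. \<forall>x\<in>P. \<not> (fst q < x \<and> x < snd q))"

lemma crosses_sym: "crosses p q \<longleftrightarrow> crosses q p"
  unfolding crosses_def by auto

lemma xrel_sym: "sym (xrel M)"
  unfolding xrel_def sym_def using crosses_sym by auto

lemma xrel_mono: "A \<subseteq> B \<Longrightarrow> xrel A \<subseteq> xrel B"
  unfolding xrel_def by auto

lemma conn_split:
  assumes c: "connected_cd R" and q1: "q1 \<in> R" and q2: "q2 \<in> R" and Q1: "Q q1" and Q2: "\<not> Q q2"
  shows "\<exists>q r. q \<in> R \<and> r \<in> R \<and> crosses q r \<and> Q q \<and> \<not> Q r"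
proof -
  have "(q1, q2) \<in> (xrel R)\<^sup>*" using c q1 q2 unfolding connected_cd_xrel by blast
  then have "Q q2 \<or> (\<exists>q r. q \<in> R \<and> r \<in> R \<and> crosses q r \<and> Q q \<and> \<not> Q r)"
  proof (induction rule: rtrancl_induct)
    case base then show ?case using Q1 by simp
  next
    case (step y z)
    then have "y \<in> R" "z \<in> R" "crosses y z" by (auto simp: xrel_def)
    then show ?case using step.IH by blast
  qed
  then show ?thesis using Q2 by blast
qed

lemma pts_pmatch: "pmatch P R \<Longrightarrow> pts R = P"
  unfolding pts_def
proof (intro equalityI subsetI)
  fix x assume "pmatch P R" "x \<in> \<Union> (chord_set ` R)"
  then show "x \<in> P" using pmatch_in by (fastforce simp: chord_set_def)
next
  fix x assume "pmatch P R" "x \<in> P"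
  then show "x \<in> \<Union> (chord_set ` R)" using pmatch_ex by blast
qed

lemma straddle:
  assumes "fst q < snd q" "fst r < snd r"
    "fst r \<noteq> fst q" "fst r \<noteq> snd q" "snd r \<noteq> fst q" "snd r \<noteq> snd q"
    "(fst q < fst r \<and> fst r < snd q) \<noteq> (fst q < snd r \<and> snd r < snd q)"
  shows "crosses q r"
  using assms unfolding crosses_def by auto

lemma inside_outside_nocross:
  assumes "a < fst c" "snd c < b" "fst c < snd c" "fst r < snd r"
    "\<not> (a < fst r \<and> fst r < b)" "\<not> (a < snd r \<and> snd r < b)"
  shows "\<not> crosses c r"
  using assms unfolding crosses_def by auto

context
  fixes S :: "nat set" and M and s
  assumes fin: "finite S" and sS: "s \<in> S" and smin: "\<And>x. x \<in> S \<Longrightarrow> s \<le> x" and M: "pmatch S M"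
begin

definition "p0 = (SOME p. p \<in> M \<and> s \<in> chord_set p)"

lemma p0: "p0 \<in> M" "s \<in> chord_set p0"
  using someI_ex[of "\<lambda>p. p \<in> M \<and> s \<in> chord_set p"] pmatch_ex[OF M sS] unfolding p0_def by auto

lemma rootc_p0: "rootc s M = {q\<in>M. (p0, q) \<in> (xrel M)\<^sup>*}"
  unfolding rootc_def using p0 pmatch_uniq[OF M] by blast

lemma rootc_sub: "rootc s M \<subseteq> M"
  unfolding rootc_def by auto

lemma p0_in: "p0 \<in> rootc s M"
  unfolding rootc_p0 using p0 by simp

lemma cross_into_root: "r \<in> rootc s M \<Longrightarrow> q \<in> M \<Longrightarrow> crosses r q \<Longrightarrow> q \<in> rootc s M"
  unfolding rootc_p0 xrel_def by (auto intro: rtrancl_into_rtrancl)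

lemma reach_root: "(p0, q) \<in> (xrel M)\<^sup>* \<Longrightarrow> (p0, q) \<in> (xrel (rootc s M))\<^sup>*"
proof (induction rule: rtrancl_induct)
  case base then show ?case by simp
next
  case (step y z)
  have "y \<in> M" "z \<in> M" "crosses y z" using step(2) by (auto simp: xrel_def)
  then have "y \<in> rootc s M" "z \<in> rootc s M" using step(1) p0 rtrancl_into_rtrancl[OF step(1) step(2)]
    unfolding rootc_p0 by auto
  then have "(y, z) \<in> xrel (rootc s M)" using \<open>crosses y z\<close> by (simp add: xrel_def)
  then show ?case by (rule rtrancl_into_rtrancl[OF step.IH])
qed

lemma root_conn: "connected_cd (rootc s M)"
  unfolding connected_cd_xrel
proof (intro conjI ballI)
  show "rootc s M \<noteq> {}" using p0_in by blast
  fix q1 q2 assume q: "q1 \<in> rootc s M" "q2 \<in> rootc s M"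
  have a: "(p0, q1) \<in> (xrel (rootc s M))\<^sup>*" "(p0, q2) \<in> (xrel (rootc s M))\<^sup>*"
    using q reach_root unfolding rootc_p0 by auto
  have "(q1, p0) \<in> (xrel (rootc s M))\<^sup>*"
    using a(1) sym_rtrancl[OF xrel_sym] by (auto dest: symD)
  then show "(q1, q2) \<in> (xrel (rootc s M))\<^sup>*" using a(2) by simp
qed

lemma root_pmatch: "pmatch (pts (rootc s M)) (rootc s M)"
proof (rule pmatchI)
  fix p assume "p \<in> rootc s M"
  then show "fst p < snd p \<and> fst p \<in> pts (rootc s M) \<and> snd p \<in> pts (rootc s M)"
    using pmatch_in[OF M] rootc_sub unfolding pts_def chord_set_def by blast
next
  fix i assume "i \<in> pts (rootc s M)" then show "\<exists>p\<in>rootc s M. i \<in> chord_set p" unfolding pts_def by blast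
next
  fix p q i assume "p \<in> rootc s M" "q \<in> rootc s M" "i \<in> chord_set p" "i \<in> chord_set q"
  then show "p = q" using pmatch_uniq[OF M] rootc_sub by blast
qed

lemma root_pts_sub: "pts (rootc s M) \<subseteq> S"
  using pmatch_in[OF M] rootc_sub unfolding pts_def chord_set_def by fastforce

lemma s_in_pts: "s \<in> pts (rootc s M)"
  using p0 p0_in unfolding pts_def by blast

lemma rest_pmatch: "pmatch (S - pts (rootc s M)) (M - rootc s M)"
proof (rule pmatchI)
  fix q assume q: "q \<in> M - rootc s M"
  have "fst q \<notin> pts (rootc s M)" "snd q \<notin> pts (rootc s M)"
    using q pmatch_uniq[OF M, of q] rootc_sub unfolding pts_def chord_set_def by blast+
  then show "fst q < snd q \<and> fst q \<in> S - pts (rootc s M) \<and> snd q \<in> S - pts (rootc s M)"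
    using pmatch_in[OF M, of q] q by auto
next
  fix i assume i: "i \<in> S - pts (rootc s M)"
  then obtain q where "q \<in> M" "i \<in> chord_set q" using pmatch_ex[OF M] by blast
  then show "\<exists>q\<in>M - rootc s M. i \<in> chord_set q" using i unfolding pts_def by blast
next
  fix p q i assume "p \<in> M - rootc s M" "q \<in> M - rootc s M" "i \<in> chord_set p" "i \<in> chord_set q"
  then show "p = q" using pmatch_uniq[OF M] by blast
qed

lemma rest_gapresp: "gapresp (pts (rootc s M)) (M - rootc s M)"
  unfolding gapresp_def
proof (intro ballI notI)
  let ?R = "rootc s M" and ?P = "pts (rootc s M)"
  fix q x assume q: "q \<in> M - ?R" and x: "x \<in> ?P" and ax: "fst q < x \<and> x < snd q"
  define a where "a = fst q"
  define b where "b = snd q"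
  have qi: "fst q < snd q" "fst q \<notin> ?P" "snd q \<notin> ?P" using pmatch_in[OF rest_pmatch, of q] q by auto
  have rP: "fst r \<in> ?P" "snd r \<in> ?P" "fst r < snd r" if "r \<in> ?R" for r
    using pmatch_in[OF root_pmatch that] by auto
  have nocross: "\<not> crosses r q" if "r \<in> ?R" for r
  proof
    assume "crosses r q"
    then have "q \<in> ?R" using cross_into_root[OF that] q by blast
    then show False using q by blast
  qed
  have notstr: "(fst q < fst r \<and> fst r < snd q) = (fst q < snd r \<and> snd r < snd q)" if r: "r \<in> ?R" for r
  proof (rule ccontr)
    assume "\<not> ?thesis"
    then have "crosses q r" using straddle[of q r] qi rP[OF r] by metis
    then show False using nocross[OF r] crosses_sym by blast
  qed
  obtain rx where rx: "rx \<in> ?R" "x \<in> chord_set rx" using x unfolding pts_def by blast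
  let ?Q = "\<lambda>c. fst q < fst c \<and> snd c < snd q"
  have Qrx: "?Q rx"
  proof -
    have "fst rx = x \<or> snd rx = x" using rx(2) by (auto simp: chord_set_def)
    then show ?thesis using notstr[OF rx(1)] ax rP[OF rx(1)] by auto
  qed
  have sq: "s < fst q" using smin[of "fst q"] pmatch_in[OF M, of q] q qi s_in_pts
    by (metis DiffD1 le_neq_implies_less)
  have Qp0: "\<not> ?Q p0"
  proof
    assume "?Q p0" then show False using p0(2) sq rP[OF p0_in] by (auto simp: chord_set_def)
  qed
  obtain c r where cr: "c \<in> ?R" "r \<in> ?R" "crosses c r" "?Q c" "\<not> ?Q r"
    using conn_split[OF root_conn rx(1) p0_in, of ?Q] Qrx Qp0 by blast
  have "\<not> (fst q < fst r \<and> fst r < snd q)" "\<not> (fst q < snd r \<and> snd r < snd q)"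
    using notstr[OF cr(2)] cr(5) by auto
  then have "\<not> crosses c r"
    using inside_outside_nocross[of "fst q" c "snd q" r] cr(4) rP[OF cr(1)] rP[OF cr(2)] by blast
  then show False using cr(3) by simp
qed

end

lemma glue:
  assumes fin: "finite S" and sS: "s \<in> P" and smin: "\<And>x. x \<in> S \<Longrightarrow> s \<le> x" and PS: "P \<subseteq> S"
    and R: "pmatch P R" and Rc: "connected_cd R" and N: "pmatch (S - P) N" and gN: "gapresp P N"
  shows "pmatch S (R \<union> N)" "rootc s (R \<union> N) = R" "R \<inter> N = {}"
proof -
  show M: "pmatch S (R \<union> N)" using pmatch_union[OF R N] PS by (metis Diff_disjoint Un_Diff_cancel sup.absorb2)
  have sS': "s \<in> S" using sS PS by auto
  show "R \<inter> N = {}"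
  proof (rule ccontr)
    assume "R \<inter> N \<noteq> {}" then obtain q where "q \<in> R" "q \<in> N" by blast
    then show False using pmatch_in[OF R, of q] pmatch_in[OF N, of q] by auto
  qed
  obtain p where p: "p \<in> R" "s \<in> chord_set p" using pmatch_ex[OF R sS] by blast
  have pp0: "p0 (R \<union> N) s = p"
    using p0[OF fin sS' smin M] pmatch_uniq[OF M, of "p0 (R \<union> N) s" p s] p by auto
  show "rootc s (R \<union> N) = R"
  proof (intro equalityI subsetI)
    fix q assume "q \<in> rootc s (R \<union> N)"
    then have "(p, q) \<in> (xrel (R \<union> N))\<^sup>*" using rootc_p0[OF fin sS' smin M] pp0 by simp
    then show "q \<in> R"
    proof (induction rule: rtrancl_induct)
      case base then show ?case using p by simp
    next
      case (step y z)
      then have yz: "y \<in> R" "z \<in> R \<union> N" "crosses y z" by (auto simp: xrel_def)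
      show "z \<in> R"
      proof (rule ccontr)
        assume "z \<notin> R" then have zN: "z \<in> N" using yz by simp
        have "fst y \<in> P" "snd y \<in> P" using pmatch_in[OF R yz(1)] by auto
        then show False using gN zN yz(3) unfolding gapresp_def crosses_def by blast
      qed
    qed
  next
    fix q assume q: "q \<in> R"
    have "(p, q) \<in> (xrel R)\<^sup>*" using Rc p(1) q unfolding connected_cd_xrel by blast
    then have "(p, q) \<in> (xrel (R \<union> N))\<^sup>*" using rtrancl_mono[OF xrel_mono[of R "R \<union> N"]] by blast
    then show "q \<in> rootc s (R \<union> N)" using rootc_p0[OF fin sS' smin M] pp0 q by simp
  qed
qed


definition gp :: "nat set \<Rightarrow> nat set \<Rightarrow> nat" where
  "gp S P = card {N. pmatch (S - P) N \<and> gapresp P N}"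

lemma decomp_card:
  assumes fin: "finite S" and ne: "S \<noteq> {}"
  shows "card {M. pmatch S M \<and> Q (pts (rootc (Min S) M))} =
         (\<Sum>P\<in>{P. P \<subseteq> S \<and> Min S \<in> P \<and> Q P}. cconn (card P) * gp S P)"
proof -
  define s where "s = Min S"
  have sS: "s \<in> S" using fin ne s_def by simp
  have smin: "\<And>x. x \<in> S \<Longrightarrow> s \<le> x" using fin s_def by simp
  let ?PP = "{P. P \<subseteq> S \<and> s \<in> P \<and> Q P}"
  let ?A = "\<lambda>P. {R. pmatch P R \<and> connected_cd R}"
  let ?B = "\<lambda>P. {N. pmatch (S - P) N \<and> gapresp P N}"
  let ?g = "\<lambda>(R, N). R \<union> N"
  have key: "rootc s (R \<union> N) = R \<and> pts R = P \<and> R \<inter> N = {} \<and> pmatch S (R \<union> N)"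
    if P: "P \<in> ?PP" and RN: "(R, N) \<in> ?A P \<times> ?B P" for P R N
    using glue[OF fin _ smin, of P R N] pts_pmatch[of P R] P RN by auto
  have eq: "{M. pmatch S M \<and> Q (pts (rootc s M))} = (\<Union>P\<in>?PP. ?g ` (?A P \<times> ?B P))"
  proof (intro equalityI subsetI)
    fix M assume "M \<in> {M. pmatch S M \<and> Q (pts (rootc s M))}"
    then have M: "pmatch S M" and QM: "Q (pts (rootc s M))" by auto
    let ?R = "rootc s M"
    have "?R \<in> ?A (pts ?R)" using root_pmatch[OF fin sS smin M] root_conn[OF fin sS smin M] by simp
    moreover have "M - ?R \<in> ?B (pts ?R)" using rest_pmatch[OF fin sS smin M] rest_gapresp[OF fin sS smin M] by simp
    moreover have "pts ?R \<in> ?PP" using root_pts_sub[OF fin sS smin M] s_in_pts[OF fin sS smin M] QM by simp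
    moreover have "M = ?g (?R, M - ?R)" using rootc_sub[OF fin sS smin M] by auto
    ultimately show "M \<in> (\<Union>P\<in>?PP. ?g ` (?A P \<times> ?B P))" by blast
  next
    fix M assume "M \<in> (\<Union>P\<in>?PP. ?g ` (?A P \<times> ?B P))"
    then obtain P R N where P: "P \<in> ?PP" and RN: "(R, N) \<in> ?A P \<times> ?B P" and MRN: "M = R \<union> N" by blast
    then show "M \<in> {M. pmatch S M \<and> Q (pts (rootc s M))}" using key[OF P RN] P by simp
  qed
  have finPP: "finite ?PP" by (rule finite_subset[of _ "Pow S"]) (use fin in auto)
  have finAB: "finite (?A P \<times> ?B P)" if "P \<in> ?PP" for P
  proof -
    have "finite P" using that fin finite_subset by auto
    then show ?thesis using fin by (auto intro: finite_subset[OF _ finite_pmatch])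
  qed
  have "card (\<Union>P\<in>?PP. ?g ` (?A P \<times> ?B P)) = (\<Sum>P\<in>?PP. card (?g ` (?A P \<times> ?B P)))"
  proof (rule card_UN_disjoint[OF finPP])
    show "\<forall>P\<in>?PP. finite (?g ` (?A P \<times> ?B P))" using finAB by blast
    show "\<forall>P\<in>?PP. \<forall>P'\<in>?PP. P \<noteq> P' \<longrightarrow> ?g ` (?A P \<times> ?B P) \<inter> ?g ` (?A P' \<times> ?B P') = {}"
    proof (intro ballI impI)
      fix P P' assume P: "P \<in> ?PP" and P': "P' \<in> ?PP" and ne: "P \<noteq> P'"
      show "?g ` (?A P \<times> ?B P) \<inter> ?g ` (?A P' \<times> ?B P') = {}"
      proof (rule ccontr)
        assume "?g ` (?A P \<times> ?B P) \<inter> ?g ` (?A P' \<times> ?B P') \<noteq> {}"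
        then obtain R N R' N' where RN: "(R, N) \<in> ?A P \<times> ?B P" and RN': "(R', N') \<in> ?A P' \<times> ?B P'"
          and e: "R \<union> N = R' \<union> N'" by auto
        have "R = R'" using key[OF P RN] key[OF P' RN'] e by metis
        then show False using key[OF P RN] key[OF P' RN'] ne by metis
      qed
    qed
  qed
  also have "\<dots> = (\<Sum>P\<in>?PP. cconn (card P) * gp S P)"
  proof (rule sum.cong[OF refl])
    fix P assume P: "P \<in> ?PP"
    have "inj_on ?g (?A P \<times> ?B P)"
    proof (rule inj_onI)
      fix x y assume x: "x \<in> ?A P \<times> ?B P" and y: "y \<in> ?A P \<times> ?B P" and exy: "?g x = ?g y"
      obtain R N where xRN: "x = (R, N)" by (cases x)
      obtain R' N' where yRN: "y = (R', N')" by (cases y)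
      have RN: "(R, N) \<in> ?A P \<times> ?B P" and RN': "(R', N') \<in> ?A P \<times> ?B P" using x y xRN yRN by auto
      have e: "R \<union> N = R' \<union> N'" using exy xRN yRN by simp
      have "R = R'" using key[OF P RN] key[OF P RN'] e by metis
      moreover have "N = (R \<union> N) - R" "N' = (R' \<union> N') - R'" using key[OF P RN] key[OF P RN'] by auto
      ultimately show "x = y" using e xRN yRN by metis
    qed
    then have "card (?g ` (?A P \<times> ?B P)) = card (?A P) * card (?B P)"
      by (simp add: card_image card_cartesian_product)
    also have "card (?A P) = cconn (card P)" using card_conn[of P] P fin finite_subset by auto
    finally show "card (?g ` (?A P \<times> ?B P)) = cconn (card P) * gp S P" unfolding gp_def by simp
  qed
  finally show ?thesis using eq s_def by simp
qed

definition Wg :: "bool \<Rightarrow> nat set \<Rightarrow> nat \<Rightarrow> nat" where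
  "Wg b S j = (\<Sum>P\<in>{P. P \<subseteq> S \<and> Min S \<in> P \<and> (b \<longrightarrow> Max S \<in> P) \<and> card P = j}. gp S P)"

lemma decomp_W:
  assumes fin: "finite S" and ne: "S \<noteq> {}"
  shows "card {M. pmatch S M \<and> (b \<longrightarrow> Max S \<in> pts (rootc (Min S) M))} =
         (\<Sum>j\<le>card S. cconn j * Wg b S j)"
proof -
  let ?PP = "{P. P \<subseteq> S \<and> Min S \<in> P \<and> (b \<longrightarrow> Max S \<in> P)}"
  have "card {M. pmatch S M \<and> (b \<longrightarrow> Max S \<in> pts (rootc (Min S) M))} =
         (\<Sum>P\<in>?PP. cconn (card P) * gp S P)"
    using decomp_card[OF fin ne, of "\<lambda>P. b \<longrightarrow> Max S \<in> P"] by simp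
  also have "\<dots> = (\<Sum>j\<le>card S. \<Sum>P\<in>{P \<in> ?PP. card P = j}. cconn (card P) * gp S P)"
  proof (rule sum.group[symmetric])
    show "finite ?PP" by (rule finite_subset[of _ "Pow S"]) (use fin in auto)
    show "card ` ?PP \<subseteq> {..card S}" using fin by (auto intro: card_mono)
  qed simp
  also have "\<dots> = (\<Sum>j\<le>card S. cconn j * Wg b S j)"
    unfolding Wg_def sum_distrib_left by (intro sum.cong refl) (auto intro!: sum.cong)
  finally show ?thesis .
qed


lemma W0: "finite S \<Longrightarrow> Wg b S 0 = 0"
  unfolding Wg_def by (rule sum.neutral) (auto dest: finite_subset)

lemma W1:
  assumes fin: "finite S" and ne: "S \<noteq> {}"
  shows "Wg b S 1 = (if b then (if card S = 1 then 1 else 0) else pmc (card S - 1))"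
proof -
  define s where "s = Min S"
  have sS: "s \<in> S" using fin ne s_def by simp
  have smin: "\<And>x. x \<in> S \<Longrightarrow> s \<le> x" using fin s_def by simp
  have maxs: "Max S = s \<longleftrightarrow> card S = 1"
  proof
    assume "Max S = s"
    then have "\<forall>x\<in>S. x = s" using fin smin by (metis Max_ge antisym)
    then have "S = {s}" using sS by blast
    then show "card S = 1" by simp
  next
    assume "card S = 1" then obtain x where "S = {x}" by (rule card_1_singletonE)
    then show "Max S = s" using s_def by simp
  qed
  have gp1: "gp S {s} = pmc (card S - 1)"
  proof -
    have "{N. pmatch (S - {s}) N \<and> gapresp {s} N} = {N. pmatch (S - {s}) N}"
    proof (intro Collect_cong iffI conjI)
      fix N assume N: "pmatch (S - {s}) N"
      show "gapresp {s} N" unfolding gapresp_def using pmatch_in[OF N] smin by fastforce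
    qed auto
    then show ?thesis unfolding gp_def using card_pmatch[of "S - {s}"] fin sS by simp
  qed
  have sets: "{P. P \<subseteq> S \<and> Min S \<in> P \<and> (b \<longrightarrow> Max S \<in> P) \<and> card P = 1} =
        (if b \<and> card S \<noteq> 1 then {} else {{s}})"
  proof -
    have "{P. P \<subseteq> S \<and> Min S \<in> P \<and> card P = 1} = {{s}}"
      using sS s_def by (auto simp: card_1_singleton_iff)
    then show ?thesis using maxs s_def by auto
  qed
  show ?thesis unfolding Wg_def sets using gp1 by auto
qed

lemma gp_split:
  assumes fin: "finite S" and sS: "s \<in> S" and smin: "\<And>x. x \<in> S \<Longrightarrow> s \<le> x"
    and tS: "t \<in> S" and st: "s < t" and P'sub: "P' \<subseteq> {x\<in>S. t \<le> x}" and tP: "t \<in> P'"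
  shows "gp S (insert s P') = pmc (card {x\<in>S. s < x \<and> x < t}) * gp {x\<in>S. t \<le> x} P'"
proof -
  let ?G = "{x\<in>S. s < x \<and> x < t}" and ?T = "{x\<in>S. t \<le> x}"
  let ?A = "{N1. pmatch ?G N1}" and ?B = "{N2. pmatch (?T - P') N2 \<and> gapresp P' N2}"
  let ?g = "\<lambda>(N1, N2). N1 \<union> N2"
  have Sdec: "S - insert s P' = ?G \<union> (?T - P')"
  proof (intro equalityI subsetI)
    fix x assume x: "x \<in> S - insert s P'"
    then have "s < x" using smin[of x] by auto
    then show "x \<in> ?G \<union> (?T - P')" using x by auto
  next
    fix x assume "x \<in> ?G \<union> (?T - P')"
    then show "x \<in> S - insert s P'" using P'sub st by auto
  qed
  have eq: "{N. pmatch (S - insert s P') N \<and> gapresp (insert s P') N} = ?g ` (?A \<times> ?B)"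
  proof (intro equalityI subsetI)
    fix N assume "N \<in> {N. pmatch (S - insert s P') N \<and> gapresp (insert s P') N}"
    then have N: "pmatch (S - insert s P') N" and gN: "gapresp (insert s P') N" by auto
    have notst: "\<not> (fst q < t \<and> t < snd q)" if "q \<in> N" for q using gN that tP unfolding gapresp_def by blast
    have qin: "fst q \<in> S - insert s P'" "snd q \<in> S - insert s P'" "fst q < snd q" if "q \<in> N" for q
      using pmatch_in[OF N that] by auto
    have side: "(fst q < t \<and> snd q < t) \<or> (t < fst q \<and> t < snd q)" if q: "q \<in> N" for q
    proof -
      have "fst q \<noteq> t" "snd q \<noteq> t" using qin[OF q] tP by auto
      then show ?thesis using notst[OF q] qin[OF q] by auto
    qed
    let ?N1 = "{q\<in>N. fst q < t}" and ?N2 = "{q\<in>N. t < fst q}"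
    have p1: "pmatch ?G ?N1"
    proof (rule pmatchI)
      fix q assume "q \<in> ?N1"
      then have q: "q \<in> N" "fst q < t" by auto
      have "snd q < t" using side[OF q(1)] q(2) by auto
      moreover have "s < fst q" using qin[OF q(1)] smin[of "fst q"] by auto
      ultimately show "fst q < snd q \<and> fst q \<in> ?G \<and> snd q \<in> ?G" using qin[OF q(1)] q by auto
    next
      fix i assume i: "i \<in> ?G"
      then have "i \<in> S - insert s P'" using Sdec by auto
      then obtain q where q: "q \<in> N" "i \<in> chord_set q" using pmatch_ex[OF N] by blast
      have "fst q < t" using q qin[OF q(1)] i by (auto simp: chord_set_def)
      then show "\<exists>q\<in>?N1. i \<in> chord_set q" using q by blast
    next
      fix p q i assume "p \<in> ?N1" "q \<in> ?N1" "i \<in> chord_set p" "i \<in> chord_set q"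
      then show "p = q" using pmatch_uniq[OF N] by blast
    qed
    have p2: "pmatch (?T - P') ?N2"
    proof (rule pmatchI)
      fix q assume q: "q \<in> ?N2"
      then show "fst q < snd q \<and> fst q \<in> ?T - P' \<and> snd q \<in> ?T - P'" using qin[of q] by auto
    next
      fix i assume i: "i \<in> ?T - P'"
      then have "i \<in> S - insert s P'" using Sdec by auto
      then obtain q where q: "q \<in> N" "i \<in> chord_set q" using pmatch_ex[OF N] by blast
      have "t < fst q" using q side[OF q(1)] i by (auto simp: chord_set_def)
      then show "\<exists>q\<in>?N2. i \<in> chord_set q" using q by blast
    next
      fix p q i assume "p \<in> ?N2" "q \<in> ?N2" "i \<in> chord_set p" "i \<in> chord_set q"
      then show "p = q" using pmatch_uniq[OF N] by blast
    qed
    have g2: "gapresp P' ?N2" using gN unfolding gapresp_def by auto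
    have "N = ?N1 \<union> ?N2" using side by auto
    moreover have "(?N1, ?N2) \<in> ?A \<times> ?B" using p1 p2 g2 by simp
    ultimately show "N \<in> ?g ` (?A \<times> ?B)" by (simp add: image_iff) blast
  next
    fix N assume "N \<in> ?g ` (?A \<times> ?B)"
    then obtain N1 N2 where N1: "pmatch ?G N1" and N2: "pmatch (?T - P') N2" and g2: "gapresp P' N2"
      and NN: "N = N1 \<union> N2" by auto
    have "pmatch (?G \<union> (?T - P')) (N1 \<union> N2)" by (rule pmatch_union[OF N1 N2]) auto
    then have pm: "pmatch (S - insert s P') N" using Sdec NN by simp
    have "gapresp (insert s P') N" unfolding gapresp_def
    proof (intro ballI notI)
      fix q x assume q: "q \<in> N" and x: "x \<in> insert s P'" and qx: "fst q < x \<and> x < snd q"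
      show False
      proof (cases "q \<in> N1")
        case True
        then have "s < fst q" "snd q < t" using pmatch_in[OF N1 True] by auto
        then show False using x qx P'sub by auto
      next
        case False
        then have "q \<in> N2" using q NN by auto
        then have "t \<le> fst q" "\<forall>y\<in>P'. \<not> (fst q < y \<and> y < snd q)"
          using pmatch_in[OF N2] g2 unfolding gapresp_def by auto
        then show False using x qx st by auto
      qed
    qed
    then show "N \<in> {N. pmatch (S - insert s P') N \<and> gapresp (insert s P') N}" using pm by simp
  qed
  have inj: "inj_on ?g (?A \<times> ?B)"
  proof (rule inj_onI)
    fix x y assume x: "x \<in> ?A \<times> ?B" and y: "y \<in> ?A \<times> ?B" and exy: "?g x = ?g y"
    obtain N1 N2 where xN: "x = (N1, N2)" by (cases x)
    obtain N1' N2' where yN: "y = (N1', N2')" by (cases y)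
    have pms: "pmatch ?G N1" "pmatch ?G N1'" "pmatch (?T - P') N2" "pmatch (?T - P') N2'"
      using x y xN yN by auto
    have lt: "\<forall>q\<in>N1. fst q < t" "\<forall>q\<in>N1'. fst q < t" "\<forall>q\<in>N2. t \<le> fst q" "\<forall>q\<in>N2'. t \<le> fst q"
      using pmatch_in[OF pms(1)] pmatch_in[OF pms(2)] pmatch_in[OF pms(3)] pmatch_in[OF pms(4)] by auto
    have e: "N1 \<union> N2 = N1' \<union> N2'" using exy xN yN by simp
    have "N1 = {q \<in> N1 \<union> N2. fst q < t}" "N1' = {q \<in> N1' \<union> N2'. fst q < t}"
      "N2 = {q \<in> N1 \<union> N2. t \<le> fst q}" "N2' = {q \<in> N1' \<union> N2'. t \<le> fst q}"
      using lt by auto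
    then show "x = y" using e xN yN by metis
  qed
  have "gp S (insert s P') = card (?A \<times> ?B)" unfolding gp_def eq using card_image[OF inj] by simp
  also have "\<dots> = card ?A * card ?B" by (rule card_cartesian_product)
  also have "card ?A = pmc (card ?G)" using card_pmatch[of ?G] fin by simp
  finally show ?thesis unfolding gp_def by simp
qed


lemma Wrec:
  assumes fin: "finite S" and ne: "S \<noteq> {}"
  shows "Wg b S (Suc (Suc j)) = (\<Sum>t\<in>S - {Min S}. pmc (card {x\<in>S. Min S < x \<and> x < t}) * Wg b {x\<in>S. t \<le> x} (Suc j))"
proof -
  define s where "s = Min S"
  have sS: "s \<in> S" using fin ne s_def by simp
  have smin: "\<And>x. x \<in> S \<Longrightarrow> s \<le> x" using fin s_def by simp
  let ?T = "\<lambda>t. {x\<in>S. t \<le> x}"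
  let ?PP = "{P. P \<subseteq> S \<and> Min S \<in> P \<and> (b \<longrightarrow> Max S \<in> P) \<and> card P = Suc (Suc j)}"
  let ?PP' = "\<lambda>t. {P. P \<subseteq> ?T t \<and> Min (?T t) \<in> P \<and> (b \<longrightarrow> Max (?T t) \<in> P) \<and> card P = Suc j}"
  have Tfin: "finite (?T t)" for t using fin by simp
  have minT: "Min (?T t) = t" if "t \<in> S" for t
    using that Tfin[of t] by (intro Min_eqI) auto
  have maxT: "Max (?T t) = Max S" if "t \<in> S" for t
    by (intro Max_eqI) (use that fin Max_ge[OF fin that] Max_in[OF fin ne] in auto)
  have st: "s < t" if "t \<in> S - {s}" for t using that smin[of t] by auto
  have maxs: "Max S \<noteq> s" if "t \<in> S - {s}" for t
  proof -
    have "t \<le> Max S" using Max_ge[OF fin] that by simp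
    then show ?thesis using st[OF that] by simp
  qed
  have eq: "?PP = (\<Union>t\<in>S - {s}. insert s ` ?PP' t)"
  proof (intro equalityI subsetI)
    fix P assume P: "P \<in> ?PP"
    have finP: "finite P" using P fin finite_subset by auto
    have "card (P - {s}) = Suc j" using P s_def finP by simp
    then have ne': "P - {s} \<noteq> {}" by (intro notI) simp
    define t where "t = Min (P - {s})"
    have tP: "t \<in> P - {s}" unfolding t_def by (rule Min_in) (use ne' finP in auto)
    have tS: "t \<in> S - {s}" using tP P by auto
    have sub: "P - {s} \<subseteq> ?T t" using P finP t_def by auto
    have "P - {s} \<in> ?PP' t"
    proof -
      have "b \<longrightarrow> Max S \<in> P - {s}" using P maxs[OF tS] by auto
      then show ?thesis using sub minT[of t] maxT[of t] tS tP \<open>card (P - {s}) = Suc j\<close> by auto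
    qed
    moreover have "P = insert s (P - {s})" using P s_def by auto
    ultimately show "P \<in> (\<Union>t\<in>S - {s}. insert s ` ?PP' t)" using tS by blast
  next
    fix P assume "P \<in> (\<Union>t\<in>S - {s}. insert s ` ?PP' t)"
    then obtain t P' where t: "t \<in> S - {s}" and P': "P' \<in> ?PP' t" and PP: "P = insert s P'" by blast
    have "s \<notin> P'" using P' st[OF t] by auto
    moreover have "finite P'" using P' Tfin finite_subset by blast
    ultimately have "card P = Suc (Suc j)" using P' PP by simp
    then show "P \<in> ?PP" using P' PP sS s_def maxT[of t] t by auto
  qed
  have "Wg b S (Suc (Suc j)) = (\<Sum>P\<in>(\<Union>t\<in>S - {s}. insert s ` ?PP' t). gp S P)"
    unfolding Wg_def eq[symmetric] ..
  also have "\<dots> = (\<Sum>t\<in>S - {s}. \<Sum>P\<in>insert s ` ?PP' t. gp S P)"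
  proof (rule sum.UNION_disjoint)
    show "finite (S - {s})" using fin by simp
    show "\<forall>t\<in>S - {s}. finite (insert s ` ?PP' t)"
    proof
      fix t show "finite (insert s ` ?PP' t)" by (rule finite_imageI, rule finite_subset[of _ "Pow (?T t)"]) (use Tfin in auto)
    qed
    show "\<forall>t\<in>S - {s}. \<forall>t'\<in>S - {s}. t \<noteq> t' \<longrightarrow> insert s ` ?PP' t \<inter> insert s ` ?PP' t' = {}"
    proof (intro ballI impI)
      fix t t' assume t: "t \<in> S - {s}" and t': "t' \<in> S - {s}" and ne: "t \<noteq> t'"
      show "insert s ` ?PP' t \<inter> insert s ` ?PP' t' = {}"
      proof (rule ccontr)
        assume "insert s ` ?PP' t \<inter> insert s ` ?PP' t' \<noteq> {}"
        then obtain A B where A: "A \<in> ?PP' t" and B: "B \<in> ?PP' t'" and e: "insert s A = insert s B" by blast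
        have "s \<notin> A" "s \<notin> B" using A B st[OF t] st[OF t'] by auto
        then have "A = B" using e by (metis insert_ident)
        moreover have "t \<in> A" "\<forall>x\<in>A. t \<le> x" using A minT[of t] t by auto
        moreover have "t' \<in> B" "\<forall>x\<in>B. t' \<le> x" using B minT[of t'] t' by auto
        ultimately show False using ne by (metis antisym)
      qed
    qed
  qed
  also have "\<dots> = (\<Sum>t\<in>S - {s}. pmc (card {x\<in>S. s < x \<and> x < t}) * Wg b (?T t) (Suc j))"
  proof (rule sum.cong[OF refl])
    fix t assume t: "t \<in> S - {s}"
    have inj: "inj_on (insert s) (?PP' t)"
    proof (rule inj_onI)
      fix A B assume "A \<in> ?PP' t" "B \<in> ?PP' t" "insert s A = insert s B"
      moreover have "s \<notin> A" "s \<notin> B" using calculation st[OF t] by auto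
      ultimately show "A = B" by (metis insert_ident)
    qed
    have "(\<Sum>P\<in>insert s ` ?PP' t. gp S P) = (\<Sum>P'\<in>?PP' t. gp S (insert s P'))"
      by (rule sum.reindex[OF inj, unfolded comp_def])
    also have "\<dots> = (\<Sum>P'\<in>?PP' t. pmc (card {x\<in>S. s < x \<and> x < t}) * gp (?T t) P')"
    proof (rule sum.cong[OF refl])
      fix P' assume P': "P' \<in> ?PP' t"
      show "gp S (insert s P') = pmc (card {x\<in>S. s < x \<and> x < t}) * gp (?T t) P'"
        by (rule gp_split[OF fin sS smin]) (use t st[OF t] P' minT[of t] in auto)
    qed
    also have "\<dots> = pmc (card {x\<in>S. s < x \<and> x < t}) * Wg b (?T t) (Suc j)"
      unfolding Wg_def sum_distrib_left ..
    finally show "(\<Sum>P\<in>insert s ` ?PP' t. gp S P) = pmc (card {x\<in>S. s < x \<and> x < t}) * Wg b (?T t) (Suc j)" .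
  qed
  finally show ?thesis using s_def by simp
qed

definition E :: "rat fps" where "E = Abs_fps (\<lambda>n. of_nat (pmc n))"

definition om :: "bool \<Rightarrow> nat \<Rightarrow> nat \<Rightarrow> rat" where
  "om b j L = (if j = 0 then 0 else (fps_X ^ j * E ^ (j - 1) * (if b then 1 else E)) $ L)"

lemma om_rec:
  "om b (Suc (Suc k)) (Suc L) = (\<Sum>a<L. of_nat (pmc a) * om b (Suc k) (L - a))"
proof -
  define G where "G = fps_X ^ Suc k * E ^ k * (if b then 1 else E)"
  have eqn: "fps_X ^ Suc (Suc k) * E ^ Suc k * (if b then 1 else E) = fps_X * (E * G)"
    unfolding G_def power_Suc by (simp only: mult_ac)
  have "om b (Suc (Suc k)) (Suc L) = (fps_X ^ Suc (Suc k) * E ^ Suc k * (if b then 1 else E)) $ Suc L"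
    by (simp add: om_def)
  also have "\<dots> = (fps_X * (E * G)) $ Suc L" by (simp only: eqn)
  also have "\<dots> = (E * G) $ L" by simp
  also have "\<dots> = (\<Sum>i=0..L. E $ i * G $ (L - i))" by (rule fps_mult_nth)
  also have "\<dots> = (\<Sum>i<L. E $ i * G $ (L - i))"
  proof -
    have "G $ 0 = 0" unfolding G_def by (simp add: mult.assoc fps_X_power_mult_nth)
    then show ?thesis by (simp add: atLeast0AtMost lessThan_Suc_atMost[symmetric])
  qed
  also have "\<dots> = (\<Sum>a<L. of_nat (pmc a) * om b (Suc k) (L - a))"
    unfolding om_def G_def E_def by simp
  finally show ?thesis .
qed

lemma Wfps: "finite S \<Longrightarrow> S \<noteq> {} \<Longrightarrow> of_nat (Wg b S j) = om b j (card S)"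
proof (induction j arbitrary: S rule: less_induct)
  case (less j)
  note fin = less.prems(1) and ne = less.prems(2)
  obtain L where L: "card S = Suc L" using fin ne by (metis card_gt_0_iff gr0_implies_Suc)
  show ?case
  proof (cases j)
    case 0 then show ?thesis using W0[OF fin] by (simp add: om_def)
  next
    case (Suc j')
    show ?thesis
    proof (cases j')
      case 0
      then have "om b j (card S) = (if b then (if L = 0 then 1 else 0) else of_nat (pmc L))"
        using Suc L by (simp add: om_def E_def)
      then show ?thesis using W1[OF fin ne] Suc 0 L by simp
    next
      case (Suc k)
      define s where "s = Min S"
      have sS: "s \<in> S" using fin ne s_def by simp
      have smin: "\<And>x. x \<in> S \<Longrightarrow> s \<le> x" using fin s_def by simp
      let ?G = "\<lambda>t. {x\<in>S. s < x \<and> x < t}" and ?T = "\<lambda>t. {x\<in>S. t \<le> x}"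
      have jj: "j = Suc (Suc k)" using \<open>j = Suc j'\<close> Suc by simp
      have G_rk: "card (?G t) = rk (S - {s}) t" for t
        unfolding rk_def using smin by (intro arg_cong[where f=card]) force
      have T_card: "card (?T t) = L - card (?G t)" if t: "t \<in> S - {s}" for t
      proof -
        have "S - {s} = ?G t \<union> ?T t" using t smin by force
        moreover have "?G t \<inter> ?T t = {}" by auto
        ultimately have "card (S - {s}) = card (?G t) + card (?T t)" using fin by (metis card_Un_disjoint finite_Diff finite_Un)
        then show ?thesis using L sS fin by simp
      qed
      have "of_nat (Wg b S j) = (\<Sum>t\<in>S - {s}. of_nat (pmc (card (?G t))) * of_nat (Wg b (?T t) (Suc k)) :: rat)"
        using Wrec[OF fin ne, of b k] jj s_def by simp
      also have "\<dots> = (\<Sum>t\<in>S - {s}. of_nat (pmc (card (?G t))) * om b (Suc k) (card (?T t)))"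
      proof (rule sum.cong[OF refl])
        fix t assume t: "t \<in> S - {s}"
        have "of_nat (Wg b (?T t) (Suc k)) = om b (Suc k) (card (?T t))"
          by (rule less.IH) (use jj fin t in auto)
        then show "of_nat (pmc (card (?G t))) * of_nat (Wg b (?T t) (Suc k)) = of_nat (pmc (card (?G t))) * om b (Suc k) (card (?T t))" by simp
      qed
      also have "\<dots> = (\<Sum>t\<in>S - {s}. (\<lambda>a. of_nat (pmc a) * om b (Suc k) (L - a)) (rk (S - {s}) t))"
        using T_card G_rk by (intro sum.cong refl) simp
      also have "\<dots> = (\<Sum>a<card (S - {s}). of_nat (pmc a) * om b (Suc k) (L - a))"
        by (rule sum.reindex_bij_betw[OF rk_bij]) (use fin in simp)
      also have "\<dots> = om b j (card S)"
        using om_rec[of b k L] L jj sS fin by simp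
      finally show ?thesis .
    qed
  qed
qed


lemma indec_iff:
  assumes n: "n \<ge> 1" and M: "pmatch {1..2*n} M"
  shows "indecomposable_cd n M \<longleftrightarrow> 2*n \<in> pts (rootc 1 M)"
proof -
  let ?S = "{1..2*n}"
  have fin: "finite ?S" by simp
  have sS: "(1::nat) \<in> ?S" using n by simp
  have smin: "\<And>x. x \<in> ?S \<Longrightarrow> 1 \<le> x" by simp
  let ?R = "rootc 1 M"
  let ?P = "pts ?R"
  show ?thesis
  proof
    assume ind: "indecomposable_cd n M"
    show "2*n \<in> ?P"
    proof (rule ccontr)
      assume nP: "2*n \<notin> ?P"
      have Psub: "?P \<subseteq> ?S" using root_pts_sub[OF fin sS smin M] .
      have finP: "finite ?P" using Psub finite_subset by blast
      have oneP: "1 \<in> ?P" using s_in_pts[OF fin sS smin M] .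
      define p where "p = Max ?P"
      have pP: "p \<in> ?P" unfolding p_def using finP oneP by (intro Max_in) auto
      have pge: "\<And>x. x \<in> ?P \<Longrightarrow> x \<le> p" unfolding p_def using finP by simp
      have p1: "1 \<le> p" using pge[OF oneP] .
      have p2n: "p < 2*n" using pP Psub nP by (metis atLeastAtMost_iff le_neq_implies_less subsetD)
      define S' where "S' = {c\<in>M. snd c \<le> p}"
      have Mrest: "pmatch (?S - ?P) (M - ?R)" using rest_pmatch[OF fin sS smin M] .
      have gr: "gapresp ?P (M - ?R)" using rest_gapresp[OF fin sS smin M] .
      have Rp: "pmatch ?P ?R" using root_pmatch[OF fin sS smin M] .
      have pmS': "pmatch {1..p} S'"
      proof (rule pmatchI)
        fix c assume "c \<in> S'"
        then show "fst c < snd c \<and> fst c \<in> {1..p} \<and> snd c \<in> {1..p}"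
          using pmatch_in[OF M, of c] unfolding S'_def by auto
      next
        fix i assume i: "i \<in> {1..p}"
        then have "i \<in> ?S" using p2n by auto
        then obtain c where c: "c \<in> M" "i \<in> chord_set c" using pmatch_ex[OF M] by blast
        have ci: "fst c \<le> i" "fst c < snd c" using c pmatch_in[OF M c(1)] by (auto simp: chord_set_def)
        have "snd c \<le> p"
        proof (cases "c \<in> ?R")
          case True
          then show ?thesis using pmatch_in[OF Rp True] pge by auto
        next
          case False
          then have cr: "c \<in> M - ?R" using c by simp
          have "fst c \<notin> ?P" using pmatch_in[OF Mrest cr] by auto
          then have "fst c \<noteq> p" using pP by auto
          then have "fst c < p" using ci i by auto
          moreover have "\<not> (fst c < p \<and> p < snd c)" using gr cr pP unfolding gapresp_def by blast
          ultimately show ?thesis by simp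
        qed
        then show "\<exists>c\<in>S'. i \<in> chord_set c" using c unfolding S'_def by blast
      next
        fix c d i assume "c \<in> S'" "d \<in> S'" "i \<in> chord_set c" "i \<in> chord_set d"
        then show "c = d" using pmatch_uniq[OF M] unfolding S'_def by blast
      qed
      have "pmc p \<noteq> 0"
      proof -
        have "{S'} \<subseteq> {M. pmatch {1..p} M}" using pmS' by simp
        then have "card {M. pmatch {1..p} M} \<noteq> 0" using finite_pmatch[of "{1..p}"]
          by (metis card_0_eq empty_not_insert finite_atLeastAtMost subset_empty)
        then show ?thesis using card_pmatch[of "{1..p}"] by simp
      qed
      then have "even p" using pmc_odd by (metis oddE)
      then obtain k where k: "p = 2 * k" by (rule evenE)
      have "0 < k" "k < n" using k p1 p2n by auto
      moreover have "S' \<subseteq> M" unfolding S'_def by auto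
      moreover have "\<Union> (chord_set ` S') = {1..2*k}" using pts_pmatch[OF pmS'] k unfolding pts_def by simp
      ultimately show False using ind unfolding indecomposable_cd_def by blast
    qed
  next
    assume nP: "2*n \<in> ?P"
    show "indecomposable_cd n M"
      unfolding indecomposable_cd_def
    proof (intro conjI notI)
      show "n \<ge> 1" using n .
      assume "\<exists>k. 0 < k \<and> k < n \<and> (\<exists>S'\<subseteq>M. \<Union> (chord_set ` S') = {1..2*k})"
      then obtain k S' where k: "0 < k" "k < n" and S': "S' \<subseteq> M" "\<Union> (chord_set ` S') = {1..2*k}" by blast
      have split: "snd c \<le> 2*k \<or> 2*k < fst c" if c: "c \<in> M" for c
      proof (rule ccontr)
        assume nt: "\<not> (snd c \<le> 2*k \<or> 2*k < fst c)"
        then have "fst c \<le> 2*k" by simp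
        moreover have "1 \<le> fst c" using pmatch_in[OF M c] by simp
        ultimately have "fst c \<in> \<Union> (chord_set ` S')" using S'(2) by simp
        then obtain d where d: "d \<in> S'" "fst c \<in> chord_set d" by blast
        have "c = d" using pmatch_uniq[OF M c, of d "fst c"] d S' by (auto simp: chord_set_def)
        then have "snd c \<in> {1..2*k}" using d S'(2) by (auto simp: chord_set_def)
        then show False using nt by simp
      qed
      obtain p where p: "p \<in> ?R" "1 \<in> chord_set p" using p0[OF fin sS smin M] p0_in[OF fin sS smin M] by blast
      obtain q where q: "q \<in> ?R" "2*n \<in> chord_set q" using nP unfolding pts_def by blast
      have RM: "?R \<subseteq> M" using rootc_sub[OF fin sS smin M] .
      have Qp: "snd p \<le> 2*k"
      proof -
        have "fst p \<le> 1" using p(2) pmatch_in[OF M, of p] RM p(1) by (auto simp: chord_set_def)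
        then show ?thesis using split[of p] RM p(1) k by auto
      qed
      have Qq: "\<not> snd q \<le> 2*k"
      proof -
        have "2*n \<le> snd q" using q(2) pmatch_in[OF M, of q] RM q(1) by (auto simp: chord_set_def)
        then show ?thesis using k by auto
      qed
      obtain c r where cr: "c \<in> ?R" "r \<in> ?R" "crosses c r" "snd c \<le> 2*k" "\<not> snd r \<le> 2*k"
        using conn_split[OF root_conn[OF fin sS smin M] p(1) q(1), of "\<lambda>c. snd c \<le> 2*k"] Qp Qq by blast
      have "2*k < fst r" using split[of r] cr RM by auto
      moreover have "fst c < snd c" "fst r < snd r" using cr RM pmatch_in[OF M] by auto
      ultimately show False using cr(3,4) unfolding crosses_def by auto
    qed
  qed
qed


definition Cz :: "rat fps" where "Cz = Abs_fps (\<lambda>j. of_nat (cconn j))"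
definition Iz :: "rat fps" where
  "Iz = Abs_fps (\<lambda>L. if L = 0 then 0 else of_nat (card {M. pmatch {1..L} M \<and> L \<in> pts (rootc 1 M)}))"
definition D :: "rat fps" where "D = Abs_fps (\<lambda>n. of_nat (pmc (2 * n)))"
definition Tj :: "nat \<Rightarrow> rat fps" where "Tj j = (if j = 0 then 0 else fps_X ^ j * E ^ (j - 1))"

lemma Tj0: "Tj j $ 0 = 0"
  unfolding Tj_def by (simp add: fps_X_power_mult_nth)

lemma Tj_low: "a < j \<Longrightarrow> Tj j $ a = 0"
  unfolding Tj_def by (simp add: fps_X_power_mult_nth)

lemma om_Tj: "om True j a = Tj j $ a" "om False j a = (Tj j * E) $ a"
  unfolding om_def Tj_def by auto

lemma count_W:
  assumes "L \<ge> 1"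
  shows "of_nat (card {M. pmatch {1..L} M \<and> (b \<longrightarrow> L \<in> pts (rootc 1 M))}) =
         (\<Sum>j\<le>L. of_nat (cconn j) * om b j L :: rat)"
proof -
  have ne: "{1..L} \<noteq> {}" using assms by simp
  have mm: "Min {1..L} = 1" "Max {1..L} = L"
    by ((rule Min_eqI | rule Max_eqI); use assms in auto)+
  have "card {M. pmatch {1..L} M \<and> (b \<longrightarrow> L \<in> pts (rootc 1 M))} =
        card {M. pmatch {1..L} M \<and> (b \<longrightarrow> Max {1..L} \<in> pts (rootc (Min {1..L}) M))}"
    by (simp only: mm)
  also have "\<dots> = (\<Sum>j\<le>card {1..L}. cconn j * Wg b {1..L} j)"
    by (rule decomp_W) (use ne in auto)
  finally have c: "card {M. pmatch {1..L} M \<and> (b \<longrightarrow> L \<in> pts (rootc 1 M))} = (\<Sum>j\<le>L. cconn j * Wg b {1..L} j)"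
    by simp
  have "of_nat (card {M. pmatch {1..L} M \<and> (b \<longrightarrow> L \<in> pts (rootc 1 M))}) = (\<Sum>j\<le>L. of_nat (cconn j) * (of_nat (Wg b {1..L} j) :: rat))"
    unfolding c by simp
  also have "\<dots> = (\<Sum>j\<le>L. of_nat (cconn j) * om b j L)"
  proof (rule sum.cong[OF refl])
    fix j show "of_nat (cconn j) * (of_nat (Wg b {1..L} j) :: rat) = of_nat (cconn j) * om b j L"
      using Wfps[of "{1..L}" b j] ne by simp
  qed
  finally show ?thesis .
qed

lemma Z1: "E = 1 + (Cz oo (fps_X * E))"
proof (rule fps_ext)
  fix n
  show "E $ n = (1 + (Cz oo (fps_X * E))) $ n"
  proof (cases "n = 0")
    case True then show ?thesis by (simp add: E_def Cz_def cconn_0)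
  next
    case False
    have "E $ n = of_nat (card {M. pmatch {1..n} M \<and> (False \<longrightarrow> n \<in> pts (rootc 1 M))})"
      unfolding E_def using card_pmatch[of "{1..n}"] by simp
    also have "\<dots> = (\<Sum>j\<le>n. of_nat (cconn j) * om False j n)" using count_W[of n False] False by simp
    also have "\<dots> = (\<Sum>j=0..n. Cz $ j * ((fps_X * E) ^ j) $ n)"
    proof (rule sum.cong)
      show "{..n} = {0..n}" by auto
    next
      fix j assume "j \<in> {0..n}"
      show "of_nat (cconn j) * om False j n = Cz $ j * ((fps_X * E) ^ j) $ n"
      proof (cases j)
        case 0 then show ?thesis by (simp add: Cz_def cconn_0)
      next
        case (Suc i)
        have "om False j n = (fps_X ^ Suc i * E ^ i * E) $ n" using Suc by (simp add: om_def)
        also have "\<dots> = ((fps_X * E) ^ j) $ n"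
          unfolding Suc power_mult_distrib power_Suc by (simp only: mult_ac)
        finally show ?thesis by (simp add: Cz_def)
      qed
    qed
    also have "\<dots> = (Cz oo (fps_X * E)) $ n" by (simp add: fps_compose_nth)
    finally show ?thesis using False by simp
  qed
qed

lemma coeff_agree_mult:
  assumes "\<And>a. a \<le> L \<Longrightarrow> f $ a = g $ a"
  shows "(f * h) $ L = (g * h) $ L"
  unfolding fps_mult_nth using assms by (intro sum.cong) auto

lemma Z2: "E = 1 + Iz * E"
proof (rule fps_ext)
  fix L
  show "E $ L = (1 + Iz * E) $ L"
  proof (cases "L = 0")
    case True then show ?thesis by (simp add: E_def Iz_def fps_mult_nth)
  next
    case False
    define Ttr where "Ttr = (\<Sum>j\<le>L. fps_const (of_nat (cconn j)) * Tj j)"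
    have "E $ L = of_nat (card {M. pmatch {1..L} M \<and> (False \<longrightarrow> L \<in> pts (rootc 1 M))})"
      unfolding E_def using card_pmatch[of "{1..L}"] by simp
    also have "\<dots> = (\<Sum>j\<le>L. of_nat (cconn j) * om False j L)" using count_W[of L False] False by simp
    also have "\<dots> = (Ttr * E) $ L"
      unfolding Ttr_def sum_distrib_right fps_sum_nth om_Tj mult.assoc by simp
    also have "\<dots> = (Iz * E) $ L"
    proof (rule coeff_agree_mult)
      fix a assume a: "a \<le> L"
      have "Ttr $ a = (\<Sum>j\<le>L. of_nat (cconn j) * Tj j $ a)" unfolding Ttr_def fps_sum_nth by simp
      also have "\<dots> = (\<Sum>j\<le>a. of_nat (cconn j) * Tj j $ a)"
        by (rule sum.mono_neutral_right) (use a Tj_low in auto)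
      also have "\<dots> = Iz $ a"
      proof (cases "a = 0")
        case True then show ?thesis by (simp add: Iz_def Tj0)
      next
        case False
        then show ?thesis using count_W[of a True] unfolding Iz_def om_Tj by simp
      qed
      finally show "Ttr $ a = Iz $ a" .
    qed
    finally show ?thesis using False by simp
  qed
qed

lemma stretch_nth: "(F oo fps_X ^ 2) $ L = (if even L then F $ (L div 2) else (0::'a::idom))"
proof -
  have "(F oo fps_X ^ 2) $ L = (\<Sum>i=0..L. F $ i * (if L = 2 * i then 1 else 0))"
    unfolding fps_compose_nth by (simp add: power_mult[symmetric])
  also have "\<dots> = (\<Sum>i=0..L. if i = L div 2 \<and> even L then F $ i else 0)"
    by (intro sum.cong refl) auto
  also have "\<dots> = (if even L then F $ (L div 2) else 0)"
    by (cases "even L") (simp_all add: sum.delta)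
  finally show ?thesis .
qed

lemma stretch_inj: "(F :: 'a::idom fps) oo fps_X ^ 2 = G oo fps_X ^ 2 \<Longrightarrow> F = G"
proof (rule fps_ext)
  fix n assume "F oo fps_X ^ 2 = G oo fps_X ^ 2"
  then have "(F oo fps_X ^ 2) $ (2 * n) = (G oo fps_X ^ 2) $ (2 * n)" by simp
  then show "F $ n = G $ n" unfolding stretch_nth by simp
qed

lemma E_D: "E = D oo fps_X ^ 2"
proof (rule fps_ext)
  fix L show "E $ L = (D oo fps_X ^ 2) $ L"
  proof (cases "even L")
    case True then obtain k where "L = 2 * k" by (rule evenE)
    then show ?thesis unfolding stretch_nth D_def E_def by simp
  next
    case False then obtain k where "L = 2 * k + 1" by (rule oddE)
    then show ?thesis unfolding stretch_nth D_def E_def using pmc_odd[of k] by simp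
  qed
qed

lemma Cz_C: "Cz = C_gf oo fps_X ^ 2"
proof (rule fps_ext)
  fix L
  have "C_gf $ k = of_nat (cconn (2 * k))" for k
    unfolding C_gf_def chord_diagram_pmatch using card_conn[of "{1..2*k}"] by simp
  then show "Cz $ L = (C_gf oo fps_X ^ 2) $ L"
  proof (cases "even L")
    case True then obtain k where "L = 2 * k" by (rule evenE)
    then show ?thesis unfolding stretch_nth Cz_def using \<open>\<And>k. C_gf $ k = _\<close> by simp
  next
    case False then obtain k where "L = 2 * k + 1" by (rule oddE)
    then show ?thesis unfolding stretch_nth Cz_def using cconn_odd[of k] by simp
  qed
qed

lemma Iz_I0: "Iz = I0_gf oo fps_X ^ 2"
proof (rule fps_ext)
  fix L
  have ev: "I0_gf $ k = Iz $ (2 * k)" for k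
  proof (cases "k = 0")
    case True then show ?thesis by (simp add: I0_gf_def Iz_def indecomposable_cd_def)
  next
    case False
    have "{M. chord_diagram k M \<and> indecomposable_cd k M} = {M. pmatch {1..2*k} M \<and> 2*k \<in> pts (rootc 1 M)}"
      using indec_iff[of k] False unfolding chord_diagram_pmatch by auto
    then show ?thesis using False by (simp add: I0_gf_def Iz_def)
  qed
  have od: "Iz $ (2 * k + 1) = 0" for k
  proof -
    have "card {M. pmatch {1..2*k+1} M \<and> 2*k+1 \<in> pts (rootc 1 M)} \<le> card {M. pmatch {1..2*k+1} M}"
      by (rule card_mono[OF finite_pmatch]) auto
    then show ?thesis using card_pmatch[of "{1..2*k+1}"] pmc_odd[of k] by (simp add: Iz_def)
  qed
  show "Iz $ L = (I0_gf oo fps_X ^ 2) $ L"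
  proof (cases "even L")
    case True then obtain k where "L = 2 * k" by (rule evenE)
    then show ?thesis unfolding stretch_nth using ev[of k] by simp
  next
    case False then obtain k where "L = 2 * k + 1" by (rule oddE)
    then show ?thesis unfolding stretch_nth using od[of k] by simp
  qed
qed

lemma X2_0: "(fps_X ^ 2 :: 'a::idom fps) $ 0 = 0" by simp

lemma D_C: "D = (1 + C_gf) oo (fps_X * D ^ 2)"
proof (rule stretch_inj)
  have W0: "(fps_X * E) $ 0 = 0" by simp
  have y0: "(fps_X * D ^ 2) $ 0 = 0" by simp
  have sq: "fps_X ^ 2 oo (fps_X * E) = (fps_X * D ^ 2) oo fps_X ^ 2"
  proof -
    have "fps_X ^ 2 oo (fps_X * E) = (fps_X * E) ^ 2" by (rule fps_X_power_compose[OF W0])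
    also have "\<dots> = fps_X ^ 2 * (D oo fps_X ^ 2) ^ 2" using E_D by (simp add: power_mult_distrib)
    also have "\<dots> = (fps_X oo fps_X ^ 2) * (D ^ 2 oo fps_X ^ 2)"
      by (simp add: fps_compose_power[OF X2_0])
    also have "\<dots> = (fps_X * D ^ 2) oo fps_X ^ 2" by (rule fps_compose_mult_distrib[OF X2_0, symmetric])
    finally show ?thesis .
  qed
  have a1: "Cz oo (fps_X * E) = C_gf oo (fps_X ^ 2 oo (fps_X * E))"
    unfolding Cz_C by (rule fps_compose_assoc[OF W0 X2_0, symmetric])
  have a2: "C_gf oo (fps_X ^ 2 oo (fps_X * E)) = (C_gf oo (fps_X * D ^ 2)) oo fps_X ^ 2"
    unfolding sq by (rule fps_compose_assoc[OF X2_0 y0])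
  have "D oo fps_X ^ 2 = 1 + (Cz oo (fps_X * E))" using Z1 E_D by simp
  also have "\<dots> = 1 + ((C_gf oo (fps_X * D ^ 2)) oo fps_X ^ 2)" by (simp only: a1 a2)
  finally show "D oo fps_X ^ 2 = ((1 + C_gf) oo (fps_X * D ^ 2)) oo fps_X ^ 2"
    by (simp add: fps_compose_add_distrib)
qed

lemma D_I: "D = 1 + I0_gf * D"
proof (rule stretch_inj)
  have "D oo fps_X ^ 2 = 1 + Iz * E" using Z2 E_D by simp
  also have "\<dots> = (1 + I0_gf * D) oo fps_X ^ 2"
    unfolding Iz_I0 E_D by (simp add: fps_compose_add_distrib fps_compose_mult_distrib[OF X2_0])
  finally show "D oo fps_X ^ 2 = (1 + I0_gf * D) oo fps_X ^ 2" .
qed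

lemma D_rec: "D $ 0 = 1" "D $ Suc n = of_nat (2 * n + 1) * D $ n"
proof -
  show "D $ 0 = 1" unfolding D_def by simp
  have "pmc (2 * Suc n) = (2 * n + 1) * pmc (2 * n)"
    by (simp add: numeral_2_eq_2)
  then show "D $ Suc n = of_nat (2 * n + 1) * D $ n" unfolding D_def by (simp only: fps_nth_Abs_fps of_nat_mult)
qed


lemma lag_K:
  fixes u :: "rat fps"
  assumes u0: "u $ 0 = 1"
  shows "(fps_deriv (fps_X * u) * inverse u ^ (k + 2)) $ (k + 1) = 0"
proof -
  define v where "v = inverse u"
  define w where "w = v ^ (k + 1)"
  define G where "G = fps_deriv u * v ^ (k + 2)"
  have uv: "u * v = 1" unfolding v_def by (rule inverse_mult_eq_1') (simp add: u0)
  have dv: "fps_deriv v = - fps_deriv u * v ^ 2" unfolding v_def by (rule fps_inverse_deriv) (simp add: u0)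
  have vv: "v ^ 2 * v ^ k = v ^ (k + 2)" by (simp add: power_add[symmetric] add.commute)
  have dw: "fps_deriv w = - (fps_const (of_nat (k + 1)) * G)"
  proof -
    have "fps_deriv w = fps_const (of_nat (k + 1)) * fps_deriv v * v ^ k"
      unfolding w_def fps_deriv_power by simp
    also have "\<dots> = - (fps_const (of_nat (k + 1)) * (fps_deriv u * (v ^ 2 * v ^ k)))"
      unfolding dv by (simp add: mult_ac)
    finally show ?thesis unfolding vv G_def .
  qed
  have yd: "fps_deriv (fps_X * u) * v ^ (k + 2) = w + fps_X * G"
  proof -
    have "fps_deriv (fps_X * u) * v ^ (k + 2) = (u * v) * v ^ (k + 1) + fps_X * G"
      unfolding G_def by (simp add: algebra_simps power_Suc)
    then show ?thesis using uv w_def by simp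
  qed
  have "fps_deriv w $ k = of_nat (k + 1) * w $ (k + 1)" by simp
  moreover have "fps_deriv w $ k = - (of_nat (k + 1) * G $ k)" unfolding dw by simp
  ultimately have "of_nat (k + 1) * (w $ (k + 1) + G $ k) = (0 :: rat)" by (simp add: algebra_simps)
  then have "w $ (k + 1) + G $ k = 0" by (simp del: of_nat_Suc)
  then show ?thesis using yd unfolding v_def by simp
qed

lemma lag_K1:
  fixes u :: "rat fps"
  assumes u0: "u $ 0 = 1"
  shows "(fps_deriv (fps_X * u) * inverse u ^ Suc 0) $ 0 = 1"
  using u0 by (simp add: fps_mult_nth)

lemma lag_K':
  fixes u :: "rat fps"
  assumes u0: "u $ 0 = 1" and j: "j \<le> n"
  shows "(fps_deriv (fps_X * u) * inverse u ^ (n + 1 - j)) $ (n - j) = (if j = n then 1 else 0)"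
proof (cases "j = n")
  case True then show ?thesis using lag_K1[OF u0] by simp
next
  case False
  then obtain k where k: "n - j = k + 1" using j by (metis Suc_eq_plus1 diff_is_0_eq le_antisym not0_implies_Suc not_le)
  then have "n + 1 - j = k + 2" using j by simp
  then show ?thesis using lag_K[OF u0, of k] k False by simp
qed

lemma trunc_split:
  fixes F :: "'a::comm_ring_1 fps"
  shows "F = (\<Sum>j\<le>n. fps_const (F $ j) * fps_X ^ j) + fps_X ^ (n + 1) * fps_shift (n + 1) F"
proof (rule fps_ext)
  fix i
  have "(\<Sum>j\<le>n. fps_const (F $ j) * fps_X ^ j) $ i = (\<Sum>j\<le>n. if i = j then F $ j else 0)"
    unfolding fps_sum_nth by (intro sum.cong refl) simp
  also have "\<dots> = (if i \<le> n then F $ i else 0)" by (simp add: sum.delta)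
  moreover have "(fps_X ^ (n + 1) * fps_shift (n + 1) F) $ i = (if i < n + 1 then 0 else F $ i)"
    unfolding fps_X_power_mult_nth by simp
  ultimately show "F $ i = ((\<Sum>j\<le>n. fps_const (F $ j) * fps_X ^ j) + fps_X ^ (n + 1) * fps_shift (n + 1) F) $ i"
    by (simp only: fps_add_nth) auto
qed

lemma lagrange_main:
  fixes phi u :: "rat fps"
  assumes u0: "u $ 0 = 1" and comp: "phi oo (fps_X * u) = u"
  shows "(phi ^ n) $ n = (fps_deriv (fps_X * u) * inverse u) $ n"
proof -
  define y where "y = fps_X * u"
  define v where "v = inverse u"
  define F where "F = phi ^ n"
  define Rc where "Rc = fps_shift (n + 1) F oo y"
  define yd where "yd = fps_deriv y"
  have y0: "y $ 0 = 0" unfolding y_def by simp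
  have uv: "u * v = 1" unfolding v_def by (rule inverse_mult_eq_1') (simp add: u0)
  have uvp: "u ^ j * v ^ j = 1" for j by (metis power_mult_distrib power_one uv)
  have "F oo y = u ^ n" unfolding F_def using fps_compose_power[OF y0, of phi n] comp y_def by simp
  moreover have "F oo y = (\<Sum>j\<le>n. fps_const (F $ j) * y ^ j) + y ^ (n + 1) * Rc"
  proof -
    have "F oo y = ((\<Sum>j\<le>n. fps_const (F $ j) * fps_X ^ j) + fps_X ^ (n + 1) * fps_shift (n + 1) F) oo y"
      using trunc_split[of F n] by simp
    also have "\<dots> = (\<Sum>j\<le>n. fps_const (F $ j) * fps_X ^ j oo y) + (fps_X ^ (n + 1) oo y) * Rc"
      unfolding fps_compose_add_distrib fps_compose_sum_distrib fps_compose_mult_distrib[OF y0] Rc_def ..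
    also have "\<dots> = (\<Sum>j\<le>n. fps_const (F $ j) * y ^ j) + y ^ (n + 1) * Rc"
      by (simp add: fps_compose_mult_distrib[OF y0] fps_X_power_compose[OF y0] fps_X_fps_compose_startby0[OF y0])
    finally show ?thesis .
  qed
  ultimately have eq: "u ^ n = (\<Sum>j\<le>n. fps_const (F $ j) * y ^ j) + y ^ (n + 1) * Rc" by simp
  have lhs: "u ^ n * (yd * v ^ (n + 1)) = yd * v"
  proof -
    have "u ^ n * (yd * v ^ (n + 1)) = (u ^ n * v ^ n) * (yd * v)" by (simp add: mult_ac power_Suc)
    then show ?thesis using uvp by simp
  qed
  have trm: "(fps_const (F $ j) * y ^ j * (yd * v ^ (n + 1))) $ n = (if j = n then F $ n else 0)"
    if j: "j \<le> n" for j
  proof -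
    have "v ^ (n + 1) = v ^ j * v ^ (n + 1 - j)" using j by (simp add: power_add[symmetric])
    then have "y ^ j * (yd * v ^ (n + 1)) = fps_X ^ j * (yd * v ^ (n + 1 - j)) * (u ^ j * v ^ j)"
      unfolding y_def by (simp add: power_mult_distrib mult_ac)
    then have e: "y ^ j * (yd * v ^ (n + 1)) = fps_X ^ j * (yd * v ^ (n + 1 - j))" using uvp by simp
    have "(fps_const (F $ j) * y ^ j * (yd * v ^ (n + 1))) $ n = (fps_const (F $ j) * (fps_X ^ j * (yd * v ^ (n + 1 - j)))) $ n"
      by (simp only: mult.assoc e)
    also have "\<dots> = F $ j * (fps_X ^ j * (yd * v ^ (n + 1 - j))) $ n" by (simp only: fps_mult_left_const_nth)
    also have "\<dots> = F $ j * (yd * v ^ (n + 1 - j)) $ (n - j)" using j by (simp only: fps_X_power_mult_nth) simp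
    finally have "(fps_const (F $ j) * y ^ j * (yd * v ^ (n + 1))) $ n = F $ j * (yd * v ^ (n + 1 - j)) $ (n - j)" .
    then show ?thesis using lag_K'[OF u0 j] unfolding yd_def y_def v_def by simp
  qed
  have rem: "(y ^ (n + 1) * Rc * (yd * v ^ (n + 1))) $ n = 0"
  proof -
    have "y ^ (n + 1) * Rc * (yd * v ^ (n + 1)) = fps_X ^ (n + 1) * (u ^ (n + 1) * Rc * (yd * v ^ (n + 1)))"
      unfolding y_def power_mult_distrib by (simp only: mult_ac)
    then show ?thesis by (simp only: fps_X_power_mult_nth) simp
  qed
  have "(yd * v) $ n = ((\<Sum>j\<le>n. fps_const (F $ j) * y ^ j) * (yd * v ^ (n + 1)) + y ^ (n + 1) * Rc * (yd * v ^ (n + 1))) $ n"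
    using lhs eq by (simp add: distrib_right)
  also have "\<dots> = (\<Sum>j\<le>n. (fps_const (F $ j) * y ^ j * (yd * v ^ (n + 1))) $ n)"
    using rem by (simp add: sum_distrib_right fps_sum_nth)
  also have "\<dots> = (\<Sum>j\<le>n. if j = n then F $ n else 0)" using trm by (intro sum.cong refl) simp
  also have "\<dots> = F $ n" by simp
  finally show ?thesis unfolding F_def yd_def y_def v_def by simp
qed


lemma I_form:
  fixes D I :: "rat fps"
  assumes D0: "D $ 0 = 1" and Drec: "\<And>n. D $ Suc n = of_nat (2 * n + 1) * D $ n" and DI: "D = 1 + I * D"
  shows "I = fps_X * (fps_deriv (fps_X * D ^ 2) * inverse (D ^ 2))"
proof -
  define iD where "iD = inverse D"
  have DiD: "D * iD = 1" unfolding iD_def by (rule inverse_mult_eq_1') (simp add: D0)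
  have rec: "D - 1 = fps_X * D + fps_const 2 * fps_X ^ 2 * fps_deriv D"
  proof (rule fps_ext)
    fix n show "(D - 1) $ n = (fps_X * D + fps_const 2 * fps_X ^ 2 * fps_deriv D) $ n"
    proof (cases n)
      case 0 then show ?thesis using D0 by (simp add: mult.assoc fps_X_power_mult_nth)
    next
      case (Suc m)
      have a: "(fps_const 2 * fps_X ^ 2 * fps_deriv D) $ Suc m = 2 * of_nat m * D $ m"
      proof (cases m)
        case 0 then show ?thesis by (simp add: mult.assoc fps_X_power_mult_nth)
      next
        case (Suc k) then show ?thesis by (simp add: mult.assoc fps_X_power_mult_nth)
      qed
      have "(D - 1) $ n = of_nat (2 * m + 1) * D $ m" using Suc Drec by simp
      also have "\<dots> = D $ m + 2 * of_nat m * D $ m" by (simp add: algebra_simps)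
      also have "\<dots> = (fps_X * D + fps_const 2 * fps_X ^ 2 * fps_deriv D) $ n" using a Suc by simp
      finally show ?thesis .
    qed
  qed
  have "I = I * (D * iD)" using DiD by simp
  also have "\<dots> = (D - 1) * iD"
  proof -
    have "D - 1 = I * D" using DI by (metis add_diff_cancel_left')
    then show ?thesis by (simp add: mult.assoc)
  qed
  also have "\<dots> = fps_X * (D * iD) + fps_const 2 * fps_X ^ 2 * fps_deriv D * iD"
    unfolding rec by (simp add: algebra_simps)
  also have "\<dots> = fps_X + fps_const 2 * fps_X ^ 2 * fps_deriv D * iD" using DiD by simp
  finally have I1: "I = fps_X + fps_const 2 * fps_X ^ 2 * fps_deriv D * iD" .
  have inv2: "inverse (D ^ 2) = iD ^ 2" unfolding iD_def by (rule fps_inverse_power)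
  have two: "fps_const (2::rat) = 2" by (simp add: fps_numeral_fps_const)
  have "fps_X * (fps_deriv (fps_X * D ^ 2) * inverse (D ^ 2)) =
        fps_X * ((D * iD) ^ 2 + fps_const 2 * fps_X * fps_deriv D * iD * (D * iD))"
    unfolding inv2 by (simp add: fps_deriv_power algebra_simps power2_eq_square two)
  also have "\<dots> = fps_X + fps_const 2 * fps_X ^ 2 * fps_deriv D * iD"
    using DiD by (simp add: algebra_simps power2_eq_square two)
  finally show ?thesis using I1 by simp
qed

lemma fps_uniq_pow:
  fixes A B :: "rat fps"
  assumes A0: "A $ 0 = 1" and B0: "B $ 0 = 1" and eq: "\<And>n. (A ^ n) $ n = (B ^ n) $ n"
  shows "A = B"
proof (rule ccontr)
  assume "A \<noteq> B"
  then have "\<exists>i. A $ i \<noteq> B $ i" by (simp add: fps_eq_iff)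
  define m where "m = (LEAST i. A $ i \<noteq> B $ i)"
  have m: "A $ m \<noteq> B $ m" unfolding m_def by (rule LeastI_ex) fact
  have lt: "\<And>i. i < m \<Longrightarrow> A $ i = B $ i" unfolding m_def using not_less_Least by blast
  have "m \<noteq> 0"
  proof
    assume "m = 0" then show False using m A0 B0 by simp
  qed
  then obtain k where k: "m = Suc k" by (cases m) auto
  define S where "S = (\<Sum>p<Suc k. A ^ p * B ^ (k - p))"
  have S0: "S $ 0 = of_nat m" unfolding S_def k by (simp add: fps_sum_nth fps_power_zeroth A0 B0)
  have "A ^ m - B ^ m = (A - B) * S" unfolding k S_def by (rule diff_power_eq_sum)
  then have "(A ^ m) $ m - (B ^ m) $ m = ((A - B) * S) $ m" by (metis fps_sub_nth)
  also have "\<dots> = (\<Sum>i=0..m. (A - B) $ i * S $ (m - i))" by (rule fps_mult_nth)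
  also have "\<dots> = (A - B) $ m * S $ 0"
    by (subst sum.remove[of _ m]) (auto simp: lt intro!: sum.neutral)
  finally have "(A ^ m) $ m - (B ^ m) $ m = (A $ m - B $ m) * of_nat m" using S0 by simp
  moreover have "(A $ m - B $ m) * of_nat m \<noteq> 0" using m \<open>m \<noteq> 0\<close> by simp
  ultimately show False using eq[of m] by simp
qed

lemma cd_unique: "chord_diagram k M \<Longrightarrow> chord_diagram k' M \<Longrightarrow> k = k'"
proof (rule ccontr)
  assume a: "chord_diagram k M" "chord_diagram k' M" "k \<noteq> k'"
  have gen: False if "chord_diagram a M" "chord_diagram b M" "a < b" for a b
  proof -
    have pa: "pmatch {1..2*a} M" "pmatch {1..2*b} M" using that chord_diagram_pmatch by auto
    have "2*b \<in> {1..2*b}" using that(3) by simp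
    then obtain p where p: "p \<in> M" "2*b \<in> chord_set p" using pmatch_ex[OF pa(2)] by blast
    then show False using pmatch_in[OF pa(1) p(1)] that(3) by (auto simp: chord_set_def)
  qed
  show False using a gen by (metis linorder_neqE_nat)
qed

lemma cd_zero: "chord_diagram 0 M \<longleftrightarrow> M = {}"
  unfolding chord_diagram_pmatch by (simp add: pmatch_empty_iff)

lemma cd_pos_ne: "chord_diagram k M \<Longrightarrow> k \<ge> 1 \<Longrightarrow> M \<noteq> {}"
  unfolding chord_diagram_pmatch using pmatch_ex[of "{1..2*k}" M 1] by auto

lemma C0: "C_gf $ 0 = 0"
  unfolding C_gf_def by (simp add: cd_zero connected_cd_def)

definition Aset :: "nat \<Rightarrow> (nat \<times> nat) set set" where
  "Aset k = {D. chord_diagram k D \<and> (D = {} \<or> connected_cd D)}"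

lemma Aset_fin: "finite (Aset k)"
  unfolding Aset_def chord_diagram_pmatch by (rule finite_subset[OF _ finite_pmatch[of "{1..2*k}"]]) auto

lemma Aset_card: "(1 + C_gf) $ k = of_nat (card (Aset k))"
proof (cases "k = 0")
  case True
  then have "Aset k = {{}}" unfolding Aset_def by (auto simp: cd_zero)
  then show ?thesis using True C0 by simp
next
  case False
  then have "Aset k = {M. chord_diagram k M \<and> connected_cd M}"
    unfolding Aset_def using cd_pos_ne[of k] by auto
  then show ?thesis using False by (simp add: C_gf_def)
qed

lemma part2:
  "(1 + C_gf) ^ 2 $ n =
     of_nat (card {(D1, D2). \<exists>n1 n2. n1 + n2 = n \<and>
                 chord_diagram n1 D1 \<and> chord_diagram n2 D2 \<and>
                 (D1 = {} \<or> connected_cd D1) \<and> (D2 = {} \<or> connected_cd D2)})"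
proof -
  have seteq: "{(D1, D2). \<exists>n1 n2. n1 + n2 = n \<and>
                 chord_diagram n1 D1 \<and> chord_diagram n2 D2 \<and>
                 (D1 = {} \<or> connected_cd D1) \<and> (D2 = {} \<or> connected_cd D2)} =
        (\<Union>i\<in>{0..n}. Aset i \<times> Aset (n - i))"
  proof (intro equalityI subsetI)
    fix x assume "x \<in> {(D1, D2). \<exists>n1 n2. n1 + n2 = n \<and>
                 chord_diagram n1 D1 \<and> chord_diagram n2 D2 \<and>
                 (D1 = {} \<or> connected_cd D1) \<and> (D2 = {} \<or> connected_cd D2)}"
    then obtain D1 D2 n1 n2 where x: "x = (D1, D2)" "n1 + n2 = n" "chord_diagram n1 D1" "chord_diagram n2 D2"
      "D1 = {} \<or> connected_cd D1" "D2 = {} \<or> connected_cd D2" by blast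
    then have "n1 \<in> {0..n}" "n2 = n - n1" by auto
    then show "x \<in> (\<Union>i\<in>{0..n}. Aset i \<times> Aset (n - i))" using x unfolding Aset_def by blast
  next
    fix x assume "x \<in> (\<Union>i\<in>{0..n}. Aset i \<times> Aset (n - i))"
    then obtain i D1 D2 where x: "i \<in> {0..n}" "x = (D1, D2)" "D1 \<in> Aset i" "D2 \<in> Aset (n - i)" by blast
    then have "i + (n - i) = n" by simp
    then show "x \<in> {(D1, D2). \<exists>n1 n2. n1 + n2 = n \<and>
                 chord_diagram n1 D1 \<and> chord_diagram n2 D2 \<and>
                 (D1 = {} \<or> connected_cd D1) \<and> (D2 = {} \<or> connected_cd D2)}"
      using x unfolding Aset_def by blast
  qed
  have "card (\<Union>i\<in>{0..n}. Aset i \<times> Aset (n - i)) = (\<Sum>i=0..n. card (Aset i \<times> Aset (n - i)))"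
  proof (rule card_UN_disjoint)
    show "\<forall>i\<in>{0..n}. finite (Aset i \<times> Aset (n - i))" using Aset_fin by simp
    show "\<forall>i\<in>{0..n}. \<forall>j\<in>{0..n}. i \<noteq> j \<longrightarrow> Aset i \<times> Aset (n - i) \<inter> Aset j \<times> Aset (n - j) = {}"
      unfolding Aset_def using cd_unique by blast
  qed simp
  then have "card {(D1, D2). \<exists>n1 n2. n1 + n2 = n \<and>
                 chord_diagram n1 D1 \<and> chord_diagram n2 D2 \<and>
                 (D1 = {} \<or> connected_cd D1) \<and> (D2 = {} \<or> connected_cd D2)} =
        (\<Sum>i=0..n. card (Aset i) * card (Aset (n - i)))"
    unfolding seteq by (simp add: card_cartesian_product)
  moreover have "(1 + C_gf) ^ 2 $ n = (\<Sum>i=0..n. of_nat (card (Aset i)) * of_nat (card (Aset (n - i))))"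
    unfolding power2_eq_square fps_mult_nth Aset_card ..
  ultimately show ?thesis by simp
qed

theorem proposition3p6p6:
  shows "(\<forall>A :: rat fps. (fps_nth A 0 = 1 \<and> (\<forall>n. fps_nth (A ^ n) n = fps_nth I0_gf (Suc n)))
            \<longleftrightarrow> A = (1 + C_gf) ^ 2)
         \<and> (\<forall>n. fps_nth ((1 + C_gf) ^ 2) n =
              of_nat (card {(D1, D2). \<exists>n1 n2. n1 + n2 = n \<and>
                 chord_diagram n1 D1 \<and> chord_diagram n2 D2 \<and>
                 (D1 = {} \<or> connected_cd D1) \<and> (D2 = {} \<or> connected_cd D2)}))"
proof (rule conjI)
  show "\<forall>n. fps_nth ((1 + C_gf) ^ 2) n =
              of_nat (card {(D1, D2). \<exists>n1 n2. n1 + n2 = n \<and>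
                 chord_diagram n1 D1 \<and> chord_diagram n2 D2 \<and>
                 (D1 = {} \<or> connected_cd D1) \<and> (D2 = {} \<or> connected_cd D2)})"
    using part2 by blast
next
  show "\<forall>A :: rat fps. (fps_nth A 0 = 1 \<and> (\<forall>n. fps_nth (A ^ n) n = fps_nth I0_gf (Suc n)))
            \<longleftrightarrow> A = (1 + C_gf) ^ 2"
  proof
  fix A :: "rat fps"
  define phi where "phi = (1 + C_gf) ^ 2"
  have D0: "D $ 0 = 1" using D_rec(1) .
  have u0: "(D ^ 2) $ 0 = 1" by (simp add: fps_power_zeroth D0)
  have y0: "(fps_X * D ^ 2) $ 0 = 0" by simp
  have comp: "phi oo (fps_X * D ^ 2) = D ^ 2"
    unfolding phi_def fps_compose_power[OF y0, symmetric] using D_C by simp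
  have phi0: "phi $ 0 = 1" unfolding phi_def by (simp add: fps_power_zeroth C0)
  have If: "I0_gf = fps_X * (fps_deriv (fps_X * D ^ 2) * inverse (D ^ 2))"
    by (rule I_form[OF D0 D_rec(2) D_I])
  have key: "(phi ^ n) $ n = I0_gf $ Suc n" for n
  proof -
    have "(phi ^ n) $ n = (fps_deriv (fps_X * D ^ 2) * inverse (D ^ 2)) $ n" by (rule lagrange_main[OF u0 comp])
    also have "\<dots> = I0_gf $ Suc n" unfolding If fps_X_mult_nth by simp
    finally show ?thesis .
  qed
  show "(A $ 0 = 1 \<and> (\<forall>n. (A ^ n) $ n = I0_gf $ Suc n)) \<longleftrightarrow> A = (1 + C_gf) ^ 2"
  proof
    assume a: "A $ 0 = 1 \<and> (\<forall>n. (A ^ n) $ n = I0_gf $ Suc n)"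
    show "A = (1 + C_gf) ^ 2" unfolding phi_def[symmetric]
      by (rule fps_uniq_pow) (use a phi0 key in auto)
  next
    assume "A = (1 + C_gf) ^ 2"
    then show "A $ 0 = 1 \<and> (\<forall>n. (A ^ n) $ n = I0_gf $ Suc n)" using phi0 key phi_def by simp
  qed
  qed
qed


end
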